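(* Consider a 3-S 3-D MUN-D (as in the context) in which the min-cut between $S_i$ and $T_j$ is at least $1$ for all $i\neq j$. Let $n'$ be a positive integer, $n=2n'+1$, with $p\nmid 2n'+1$; let $m$ be such that $n\mid p^m-1$ and $\alpha\in\mathbb{F}_{p^m}$ of multiplicative order $n$. Regard the LECs $\underline{\varepsilon}$ as indeterminates and let $\hat M_{ij}=\mathrm{diag}\big(M_{ij}(\alpha^0),\dots,M_{ij}(\alpha^{n-1})\big)$ (invertible over $\mathbb{F}_{p^m}(\underline{\varepsilon})$). Put $\hat U=\hat M_{12}^{-1}\hat M_{32}\hat M_{31}^{-1}\hat M_{21}\hat M_{23}^{-1}\hat M_{13}$, $\hat R=\hat M_{13}\hat M_{23}^{-1}$, $\hat S=\hat M_{12}\hat M_{32}^{-1}$, $W=[1\ 1\ \cdots\ 1]^T$ of length $n$, and $V_1=[W\ \hat UW\ \cdots\ \hat U^{n'}W]$ ($n\times(n'+1)$), $V_2=[\hat RW\ \hat R\hat UW\ \cdots\ \hat R\hat U^{n'-1}W]$ ($n\times n'$), $V_3=[\hat S\hat UW\ \hat S\hat U^2W\ \cdots\ \hat S\hat U^{n'}W]$ ($n\times n'$). If $$\mathrm{Rank}[V_1\ \ \hat M_{11}^{-1}\hat M_{21}V_2]=\mathrm{Rank}[\hat M_{12}^{-1}\hat M_{22}V_2\ \ V_1]=\mathrm{Rank}[\hat M_{13}^{-1}\hat M_{33}V_3\ \ V_1]=2n'+1$$ over $\mathbb{F}_{p^m}(\underline{\varepsilon})$, then there is an assignment of values to the LECs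 from a finite extension of $\mathbb{F}_{p^m}$ under which, in the system $Y_j=\sum_{i=1}^3\hat M_{ij}V_iX_i'$ ($j=1,2,3$) with $X_1'$ of length $n'+1$ and $X_2',X_3'$ of length $n'$, each $X_j'$ can be exactly recovered from $Y_j$ (i.e. there is a matrix $G_j$ with $G_jY_j=X_j'$ for all $X_1',X_2',X_3'$).
   Context: A three-source three-destination multiple unicast network with delays (3-S 3-D MUN-D) is a finite directed acyclic graph whose links each carry one symbol of $\mathbb{F}_{p^m}$ per time unit with unit delay, with sources $S_1,S_2,S_3$ each generating one process and destinations $T_1,T_2,T_3$ each with one output, $T_i$ demanding the process of $S_i$; the min-cut between $S_i$ and $T_i$ is $1$. Linear network coding with time-invariant local encoding coefficients (LECs) $\underline{\varepsilon}$ is used (each link symbol at time $t+1$ is an LEC-weighted combination of the source symbol at its tail, if any, and of the incoming link symbols of its tail at time $t$; destination outputs are LEC-weighted combinations of incoming link symbols of the previous time). The transfer function from $S_i$ to $T_j$ is $D^{d'_{min}}M_{ij}(D)$, $M_{ij}(D)=\sum_{d=0}^{d_{max}}M_{ij}^{(d)}D^d$, with $d'_{min}$ the minimum path delay over all pairs and coefficients polynomial in $\underline{\varepsilon}$. Meaning of the model: each source transmits $n>d_{max}$ generations preceded by a cyclic prefix of its last $d_{max}$ generations, after applying a length-$n$ DFT (with parameter $\alpha$) to the precoded block $V_iX_i'$; each destination discards the prefix and applies the inverse DFT, yielding $Y_j=\sum_i\hat M_{ij}V_iX_i'$. *)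

theory Defs
  imports
    "HOL-Library.Poly_Mapping"
    "HOL-Library.Product_Lexorder"
    "HOL-Computational_Algebra.Fraction_Field"
    "HOL-Algebra.Algebraic_Closure_Type"
    "Jordan_Normal_Form.Gauss_Jordan_Elimination"
    "Jordan_Normal_Form.DL_Rank"
begin

text \<open>Edges (links) are natural numbers; vertices have an arbitrary type.
  Sources and destinations are indexed by 1, 2, 3.\<close>

record 'v mun =
  edges :: "nat set"
  etail :: "nat \<Rightarrow> 'v"
  ehead :: "nat \<Rightarrow> 'v"
  src   :: "nat \<Rightarrow> 'v"
  dst   :: "nat \<Rightarrow> 'v"

definition is_path :: "'v mun \<Rightarrow> nat list \<Rightarrow> 'v \<Rightarrow> 'v \<Rightarrow> bool" where
  "is_path N es s t \<longleftrightarrow> es \<noteq> [] \<and> set es \<subseteq> edges N \<and>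
     etail N (hd es) = s \<and> ehead N (last es) = t \<and>
     (\<forall>l. Suc l < length es \<longrightarrow> ehead N (es ! l) = etail N (es ! Suc l))"

definition paths :: "'v mun \<Rightarrow> 'v \<Rightarrow> 'v \<Rightarrow> nat list set" where
  "paths N s t = {es. is_path N es s t}"

definition finite_dag :: "'v mun \<Rightarrow> bool" where
  "finite_dag N \<longleftrightarrow> finite (edges N) \<and> (\<forall>v es. \<not> is_path N es v v)"

definition min_cut :: "'v mun \<Rightarrow> 'v \<Rightarrow> 'v \<Rightarrow> nat" where
  "min_cut N s t = (LEAST k. \<exists>C \<subseteq> edges N. card C = k \<and>
      (\<forall>es. is_path N es s t \<longrightarrow> set es \<inter> C \<noteq> {}))"

text \<open>LEC variables: (0,i,e) weight of the source symbol of S_i on link e (tail e = S_i);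
  (1,e,e') weight of link e on link e' (head e = tail e');
  (2,e,j) weight of link e in the output of T_j (head e = T_j).\<close>
type_synonym lecvar = "nat \<times> nat \<times> nat"

definition src_var :: "nat \<Rightarrow> nat \<Rightarrow> lecvar" where "src_var i e = (0, i, e)"
definition lnk_var :: "nat \<Rightarrow> nat \<Rightarrow> lecvar" where "lnk_var e e' = (1, e, e')"
definition dst_var :: "nat \<Rightarrow> nat \<Rightarrow> lecvar" where "dst_var e j = (2, e, j)"

definition path_gain :: "(lecvar \<Rightarrow> 'k::comm_ring_1) \<Rightarrow> nat \<Rightarrow> nat \<Rightarrow> nat list \<Rightarrow> 'k" where
  "path_gain eps i j es =
     eps (src_var i (hd es)) * (\<Prod>l<length es - 1. eps (lnk_var (es ! l) (es ! Suc l)))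
       * eps (dst_var (last es) j)"

text \<open>Delay of a path of k links from a source symbol to a destination output is k + 1;
  d'_min is the minimum path delay over all source/destination pairs.\<close>
definition dmin :: "'v mun \<Rightarrow> nat" where
  "dmin N = Min {length es + 1 | es i j. i \<in> {1,2,3} \<and> j \<in> {1,2,3} \<and> is_path N es (src N i) (dst N j)}"

text \<open>Evaluation of M_ij(D) = D^(-d'_min) * (transfer function from S_i to T_j) at D = x.\<close>
definition Mval :: "'v mun \<Rightarrow> (lecvar \<Rightarrow> 'k::comm_ring_1) \<Rightarrow> nat \<Rightarrow> nat \<Rightarrow> 'k \<Rightarrow> 'k" where
  "Mval N eps i j x = (\<Sum>es\<in>paths N (src N i) (dst N j).
      path_gain eps i j es * x ^ (length es + 1 - dmin N))"

definition Mhat :: "'v mun \<Rightarrow> (lecvar \<Rightarrow> 'k::comm_ring_1) \<Rightarrow> 'k \<Rightarrow> nat \<Rightarrow> nat \<Rightarrow> nat \<Rightarrow> 'k mat" where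
  "Mhat N eps a n i j = mat n n (\<lambda>(r, c). if r = c then Mval N eps i j (a ^ r) else 0)"

definition minv :: "'k::field mat \<Rightarrow> 'k mat" where
  "minv A = the (mat_inverse A)"

definition Uhat :: "'v mun \<Rightarrow> (lecvar \<Rightarrow> 'k::field) \<Rightarrow> 'k \<Rightarrow> nat \<Rightarrow> 'k mat" where
  "Uhat N eps a n = minv (Mhat N eps a n 1 2) * Mhat N eps a n 3 2 * minv (Mhat N eps a n 3 1)
      * Mhat N eps a n 2 1 * minv (Mhat N eps a n 2 3) * Mhat N eps a n 1 3"

definition Rhat :: "'v mun \<Rightarrow> (lecvar \<Rightarrow> 'k::field) \<Rightarrow> 'k \<Rightarrow> nat \<Rightarrow> 'k mat" where
  "Rhat N eps a n = Mhat N eps a n 1 3 * minv (Mhat N eps a n 2 3)"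

definition Shat :: "'v mun \<Rightarrow> (lecvar \<Rightarrow> 'k::field) \<Rightarrow> 'k \<Rightarrow> nat \<Rightarrow> 'k mat" where
  "Shat N eps a n = Mhat N eps a n 1 2 * minv (Mhat N eps a n 3 2)"

definition Wvec :: "nat \<Rightarrow> 'k::field vec" where
  "Wvec n = vec n (\<lambda>_. 1)"

definition V1 :: "'v mun \<Rightarrow> (lecvar \<Rightarrow> 'k::field) \<Rightarrow> 'k \<Rightarrow> nat \<Rightarrow> 'k mat" where
  "V1 N eps a n' = (let n = 2 * n' + 1 in
     mat_of_cols n [(Uhat N eps a n ^\<^sub>m k) *\<^sub>v Wvec n. k \<leftarrow> [0..<n' + 1]])"

definition V2 :: "'v mun \<Rightarrow> (lecvar \<Rightarrow> 'k::field) \<Rightarrow> 'k \<Rightarrow> nat \<Rightarrow> 'k mat" where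
  "V2 N eps a n' = (let n = 2 * n' + 1 in
     mat_of_cols n [Rhat N eps a n *\<^sub>v ((Uhat N eps a n ^\<^sub>m k) *\<^sub>v Wvec n). k \<leftarrow> [0..<n']])"

definition V3 :: "'v mun \<Rightarrow> (lecvar \<Rightarrow> 'k::field) \<Rightarrow> 'k \<Rightarrow> nat \<Rightarrow> 'k mat" where
  "V3 N eps a n' = (let n = 2 * n' + 1 in
     mat_of_cols n [Shat N eps a n *\<^sub>v ((Uhat N eps a n ^\<^sub>m (k + 1)) *\<^sub>v Wvec n). k \<leftarrow> [0..<n']])"

definition hcat :: "nat \<Rightarrow> 'k mat \<Rightarrow> 'k mat \<Rightarrow> 'k mat" where
  "hcat n A B = mat_of_cols n (cols A @ cols B)"

definition Yout :: "'v mun \<Rightarrow> (lecvar \<Rightarrow> 'k::field) \<Rightarrow> 'k \<Rightarrow> nat \<Rightarrow> nat \<Rightarrow> (nat \<Rightarrow> 'k vec) \<Rightarrow> 'k vec" where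
  "Yout N eps a n' j xs = (let n = 2 * n' + 1 in
      Mhat N eps a n 1 j *\<^sub>v (V1 N eps a n' *\<^sub>v xs 1)
    + Mhat N eps a n 2 j *\<^sub>v (V2 N eps a n' *\<^sub>v xs 2)
    + Mhat N eps a n 3 j *\<^sub>v (V3 N eps a n' *\<^sub>v xs 3))"

definition xlen :: "nat \<Rightarrow> nat \<Rightarrow> nat" where
  "xlen n' i = (if i = 1 then n' + 1 else n')"

type_synonym 'f ratfun = "((lecvar \<Rightarrow>\<^sub>0 nat) \<Rightarrow>\<^sub>0 'f) fract"

definition lec_indet :: "lecvar \<Rightarrow> 'f::field ratfun" where
  "lec_indet v = Fract (Poly_Mapping.single (Poly_Mapping.single v 1) 1) 1"

definition rconst :: "'f::field \<Rightarrow> 'f ratfun" where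
  "rconst c = Fract (Poly_Mapping.single 0 c) 1"

end

theory Submission
  imports Defs
begin



definition monoe :: "('v \<Rightarrow> 'a::comm_semiring_1) \<Rightarrow> ('v \<Rightarrow>\<^sub>0 nat) \<Rightarrow> 'a" where
  "monoe e m = (\<Prod>v\<in>Poly_Mapping.keys m. e v ^ Poly_Mapping.lookup m v)"

lemma mono_superset:
  assumes "finite S" "Poly_Mapping.keys m \<subseteq> S"
  shows "monoe e m = (\<Prod>v\<in>S. e v ^ Poly_Mapping.lookup m v)"
  unfolding monoe_def using assms
  by (intro prod.mono_neutral_left) (auto simp: in_keys_iff)

lemma mono_zero[simp]: "monoe e 0 = 1"
  by (simp add: monoe_def)

lemma mono_single[simp]: "monoe e (Poly_Mapping.single v k) = e v ^ k"
  by (cases "k = 0") (auto simp: monoe_def)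

lemma mono_add: "monoe e (m1 + m2) = monoe e m1 * monoe e m2"
proof -
  let ?S = "Poly_Mapping.keys m1 \<union> Poly_Mapping.keys m2"
  have f: "finite ?S" by simp
  have "Poly_Mapping.keys (m1 + m2) \<subseteq> ?S" by (rule keys_add)
  then have "monoe e (m1 + m2) = (\<Prod>v\<in>?S. e v ^ Poly_Mapping.lookup (m1 + m2) v)"
    by (rule mono_superset[OF f])
  also have "\<dots> = (\<Prod>v\<in>?S. e v ^ Poly_Mapping.lookup m1 v * e v ^ Poly_Mapping.lookup m2 v)"
    by (simp add: lookup_add power_add)
  also have "\<dots> = (\<Prod>v\<in>?S. e v ^ Poly_Mapping.lookup m1 v) * (\<Prod>v\<in>?S. e v ^ Poly_Mapping.lookup m2 v)"
    by (rule prod.distrib)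
  also have "\<dots> = monoe e m1 * monoe e m2"
    by (simp add: mono_superset[OF f])
  finally show ?thesis .
qed

lemma mono_sum: "monoe e (\<Sum>l\<in>L. f l) = (\<Prod>l\<in>L. monoe e (f l))"
  by (induction L rule: infinite_finite_induct) (auto simp: mono_add)

definition ev :: "(lecvar \<Rightarrow> 'f::field alg_closure) \<Rightarrow> ((lecvar \<Rightarrow>\<^sub>0 nat) \<Rightarrow>\<^sub>0 'f) \<Rightarrow> 'f alg_closure" where
  "ev e p = (\<Sum>m\<in>Poly_Mapping.keys p. to_ac (Poly_Mapping.lookup p m) * monoe e m)"

lemma ev_superset:
  assumes "finite S" "Poly_Mapping.keys p \<subseteq> S"
  shows "ev e p = (\<Sum>m\<in>S. to_ac (Poly_Mapping.lookup p m) * monoe e m)"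
  unfolding ev_def using assms
  by (intro sum.mono_neutral_left) (auto simp: in_keys_iff)

lemma ev_zero[simp]: "ev e 0 = 0" by (simp add: ev_def)

lemma ev_add: "ev e (p + q) = ev e p + ev e q"
proof -
  let ?S = "Poly_Mapping.keys p \<union> Poly_Mapping.keys q"
  have f: "finite ?S" by simp
  have "ev e (p + q) = (\<Sum>m\<in>?S. to_ac (Poly_Mapping.lookup (p+q) m) * monoe e m)"
    by (rule ev_superset[OF f keys_add])
  also have "\<dots> = (\<Sum>m\<in>?S. to_ac (Poly_Mapping.lookup p m) * monoe e m) + (\<Sum>m\<in>?S. to_ac (Poly_Mapping.lookup q m) * monoe e m)"
    by (simp add: lookup_add distrib_right sum.distrib)
  finally show ?thesis by (simp add: ev_superset[OF f])
qed

lemma ev_single[simp]: "ev e (Poly_Mapping.single m c) = to_ac c * monoe e m"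
  by (cases "c = 0") (auto simp: ev_def)

lemma update_as_add: "a \<notin> Poly_Mapping.keys f \<Longrightarrow> Poly_Mapping.update a b f = f + Poly_Mapping.single a b"
  by (rule poly_mapping_eqI) (auto simp: lookup_update lookup_add lookup_single in_keys_iff when_def)

lemma ev_single_mult: "ev e (Poly_Mapping.single m c * q) = to_ac c * monoe e m * ev e q"
proof (induction q rule: update_induct)
  case const
  then show ?case by simp
next
  case (update a b f)
  then show ?case
    by (simp add: update_as_add distrib_left ev_add mult_single mono_add algebra_simps)
qed

lemma ev_mult: "ev e (p * q) = ev e p * ev e q"
proof (induction p rule: update_induct)
  case const
  then show ?case by simp
next
  case (update a b f)
  then show ?case
    by (simp add: update_as_add distrib_right ev_add ev_single_mult)
qed

lemma ev_one[simp]: "ev e 1 = 1"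
  by (simp add: ev_def)

interpretation ev_hom: comm_ring_hom "ev e"
  by unfold_locales (simp_all add: ev_add ev_mult)




lemma alg_closed_infinite: "infinite (UNIV :: 'a::alg_closed_field set)"
proof
  assume fin: "finite (UNIV :: 'a set)"
  define P :: "'a poly" where "P = (\<Prod>a\<in>UNIV. [:-a, 1:]) + 1"
  have d: "degree (\<Prod>a\<in>(UNIV::'a set). [:-a, 1:]) = card (UNIV :: 'a set)"
    by (subst degree_prod_eq_sum_degree) auto
  have "card (UNIV :: 'a set) \<ge> 2"
  proof -
    have "{0,1} \<subseteq> (UNIV :: 'a set)" by auto
    then have "card {0,(1::'a)} \<le> card (UNIV :: 'a set)" using fin by (intro card_mono) auto
    then show ?thesis by simp
  qed
  then have "degree P = card (UNIV :: 'a set)" unfolding P_def using d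
    by (subst degree_add_eq_left) auto
  then have "degree P > 0" using \<open>card _ \<ge> 2\<close> by simp
  then obtain x where "poly P x = 0" using alg_closed_imp_poly_has_root by blast
  moreover have "poly (\<Prod>a\<in>(UNIV::'a set). [:-a, 1:]) x = 0"
    using fin by (simp add: poly_prod)
  ultimately show False unfolding P_def by simp
qed

lemma mono_indep:
  assumes "x \<notin> Poly_Mapping.keys m"
  shows "monoe (e(x := t)) m = monoe e m"
  unfolding monoe_def using assms by (intro prod.cong) auto

lemma mono_update:
  "monoe e m = e x ^ Poly_Mapping.lookup m x * monoe e (Poly_Mapping.update x 0 m)"
proof (cases "x \<in> Poly_Mapping.keys m")
  case True
  have "monoe e m = e x ^ Poly_Mapping.lookup m x *
          (\<Prod>v\<in>Poly_Mapping.keys (Poly_Mapping.update x 0 m). e v ^ Poly_Mapping.lookup m v)"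
    unfolding monoe_def by (simp add: keys_update prod.remove[OF finite_keys True])
  also have "(\<Prod>v\<in>Poly_Mapping.keys (Poly_Mapping.update x 0 m). e v ^ Poly_Mapping.lookup m v)
        = monoe e (Poly_Mapping.update x 0 m)"
    unfolding monoe_def by (intro prod.cong) (auto simp: keys_update lookup_update)
  finally show ?thesis .
next
  case False
  then have "Poly_Mapping.update x 0 m = m"
    by (intro poly_mapping_eqI) (auto simp: lookup_update in_keys_iff)
  then show ?thesis using False by (simp add: in_keys_iff)
qed

lemma update_eq_imp:
  assumes "Poly_Mapping.lookup m x = Poly_Mapping.lookup m' x"
    "Poly_Mapping.update x 0 m = Poly_Mapping.update x 0 m'"
  shows "m = m'"
proof (rule poly_mapping_eqI)
  fix v
  show "Poly_Mapping.lookup m v = Poly_Mapping.lookup m' v"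
  proof (cases "v = x")
    case False
    then show ?thesis using arg_cong[OF assms(2), of "\<lambda>p. Poly_Mapping.lookup p v"]
      by (simp add: lookup_update)
  qed (use assms in auto)
qed

lemma nonvanish_gen:
  fixes g :: "'i \<Rightarrow> ('v \<Rightarrow>\<^sub>0 nat)" and c :: "'i \<Rightarrow> 'a::field"
  assumes inf: "infinite (UNIV :: 'a set)"
  assumes "finite VS" "finite I" "\<forall>i\<in>I. Poly_Mapping.keys (g i) \<subseteq> VS"
    "(\<Sum>i\<in>{i\<in>I. g i = m0}. c i) \<noteq> 0"
  shows "\<exists>e. (\<Sum>i\<in>I. c i * monoe e (g i)) \<noteq> 0"
  using assms(2-)
proof (induction VS arbitrary: I g m0 rule: finite_induct)
  case empty
  then have g0: "\<forall>i\<in>I. g i = 0" by auto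
  show ?case
  proof (cases "m0 = 0")
    case True
    then have eq: "{i\<in>I. g i = m0} = I" using g0 by auto
    have s: "sum c I \<noteq> 0" using empty.prems(3) unfolding eq .
    have "(\<Sum>i\<in>I. c i * monoe e (g i)) = sum c I" for e using g0 by simp
    then have "(\<Sum>i\<in>I. c i * monoe e (g i)) \<noteq> 0" for e using s by simp
    then show ?thesis by blast
  next
    case False
    then have eq: "{i\<in>I. g i = m0} = {}" using g0 by auto
    have "sum c {i\<in>I. g i = m0} = 0" unfolding eq by simp
    then show ?thesis using empty.prems(3) by contradiction
  qed
next
  case (insert x VS)
  define upd where "upd m = Poly_Mapping.update x 0 m" for m :: "'v \<Rightarrow>\<^sub>0 nat"
  define K where "K = (\<lambda>i. Poly_Mapping.lookup (g i) x) ` I"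
  define A where "A e k = (\<Sum>i\<in>{i\<in>I. Poly_Mapping.lookup (g i) x = k}. c i * monoe e (upd (g i)))" for e k
  have finK: "finite K" using insert by (simp add: K_def)
  have split: "(\<Sum>i\<in>I. c i * monoe e (g i)) = (\<Sum>k\<in>K. e x ^ k * A e k)" for e
  proof -
    have "(\<Sum>i\<in>I. c i * monoe e (g i)) =
        (\<Sum>k\<in>K. \<Sum>i\<in>{i\<in>I. Poly_Mapping.lookup (g i) x = k}. c i * monoe e (g i))"
      unfolding K_def by (rule sum.image_gen[OF insert.prems(1)])
    also have "\<dots> = (\<Sum>k\<in>K. e x ^ k * A e k)"
      unfolding A_def sum_distrib_left
    proof (intro sum.cong refl)
      fix k i assume "i \<in> {i\<in>I. Poly_Mapping.lookup (g i) x = k}"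
      then have "Poly_Mapping.lookup (g i) x = k" by simp
      then show "c i * monoe e (g i) = e x ^ k * (c i * monoe e (upd (g i)))"
        using mono_update[of e "g i" x] unfolding upd_def by (simp add: mult_ac)
    qed
    finally show ?thesis .
  qed
  have keysu: "Poly_Mapping.keys (upd (g i)) \<subseteq> VS" if "i \<in> I" for i
    using insert.prems(2) that by (auto simp: upd_def keys_update)
  have Aindep: "A (e(x := t)) k = A e k" for e t k
    unfolding A_def
  proof (intro sum.cong refl)
    fix i assume "i \<in> {i\<in>I. Poly_Mapping.lookup (g i) x = k}"
    then have "x \<notin> Poly_Mapping.keys (upd (g i))" using keysu insert.hyps(2) by auto
    then show "c i * monoe (e(x := t)) (upd (g i)) = c i * monoe e (upd (g i))"
      by (simp add: mono_indep)
  qed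
  define k0 where "k0 = Poly_Mapping.lookup m0 x"
  define I0 where "I0 = {i\<in>I. Poly_Mapping.lookup (g i) x = k0}"
  have setq: "{i\<in>I0. upd (g i) = upd m0} = {i\<in>I. g i = m0}"
  proof (intro equalityI subsetI)
    fix i assume "i \<in> {i\<in>I0. upd (g i) = upd m0}"
    then show "i \<in> {i\<in>I. g i = m0}"
      using update_eq_imp[of "g i" x m0] by (simp add: I0_def upd_def k0_def)
  next
    fix i assume "i \<in> {i\<in>I. g i = m0}"
    then show "i \<in> {i\<in>I0. upd (g i) = upd m0}" by (simp add: I0_def k0_def)
  qed
  have "\<exists>e. (\<Sum>i\<in>I0. c i * monoe e (upd (g i))) \<noteq> 0"
  proof (rule insert.IH[of I0 "\<lambda>i. upd (g i)" "upd m0"])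
    show "finite I0" using insert.prems(1) by (simp add: I0_def)
    show "\<forall>i\<in>I0. Poly_Mapping.keys (upd (g i)) \<subseteq> VS" using keysu by (simp add: I0_def)
    show "(\<Sum>i\<in>{i\<in>I0. upd (g i) = upd m0}. c i) \<noteq> 0" unfolding setq by (rule insert.prems(3))
  qed
  then obtain e0 where e0: "A e0 k0 \<noteq> 0" unfolding A_def I0_def by blast
  define Q where "Q = (\<Sum>k\<in>K. monom (A e0 k) k)"
  have "coeff Q k0 = A e0 k0"
  proof (cases "k0 \<in> K")
    case True
    then show ?thesis unfolding Q_def coeff_sum using finK
      by (simp add: sum.delta)
  next
    case False
    then have E: "{i\<in>I. Poly_Mapping.lookup (g i) x = k0} = {}" unfolding K_def by auto
    have "A e0 k0 = 0" unfolding A_def E by simp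
    then show ?thesis using e0 by simp
  qed
  then have "Q \<noteq> 0" using e0 by auto
  then have "finite {t. poly Q t = 0}" by (rule poly_roots_finite)
  then obtain t where t: "poly Q t \<noteq> 0"
    using ex_new_if_finite[OF inf] by blast
  have "(\<Sum>i\<in>I. c i * monoe (e0(x := t)) (g i)) = (\<Sum>k\<in>K. t ^ k * A e0 k)"
    by (simp add: split Aindep)
  also have "\<dots> = poly Q t"
    unfolding Q_def poly_sum by (simp add: poly_monom mult.commute)
  finally have "(\<Sum>i\<in>I. c i * monoe (e0(x := t)) (g i)) \<noteq> 0" using t by simp
  then show ?case by blast
qed





type_synonym 'f mpoly = "(lecvar \<Rightarrow>\<^sub>0 nat) \<Rightarrow>\<^sub>0 'f"

definition good :: "(lecvar \<Rightarrow> 'f::field alg_closure) \<Rightarrow> 'f ratfun \<Rightarrow> bool" where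
  "good e x \<longleftrightarrow> (\<exists>p q. ev e q \<noteq> 0 \<and> x = Fract p q)"

definition phi :: "(lecvar \<Rightarrow> 'f::field alg_closure) \<Rightarrow> 'f ratfun \<Rightarrow> 'f alg_closure" where
  "phi e x = (THE y. \<exists>p q. ev e q \<noteq> 0 \<and> x = Fract p q \<and> y = ev e p / ev e q)"

lemma ev_nz_imp_nz: "ev e q \<noteq> 0 \<Longrightarrow> q \<noteq> 0" by auto

lemma phi_Fract:
  assumes "ev e q \<noteq> 0"
  shows "phi e (Fract p q) = ev e p / ev e q"
  unfolding phi_def
proof (rule the_equality)
  show "\<exists>p' q'. ev e q' \<noteq> 0 \<and> Fract p q = Fract p' q' \<and> ev e p / ev e q = ev e p' / ev e q'"
    using assms by blast
next
  fix y assume "\<exists>p' q'. ev e q' \<noteq> 0 \<and> Fract p q = Fract p' q' \<and> y = ev e p' / ev e q'"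
  then obtain p' q' where h: "ev e q' \<noteq> 0" "Fract p q = Fract p' q'" "y = ev e p' / ev e q'" by blast
  have "p * q' = p' * q" using h(2) eq_fract(1)[OF ev_nz_imp_nz[OF assms] ev_nz_imp_nz[OF h(1)]] by simp
  then have eq: "ev e p * ev e q' = ev e p' * ev e q" by (metis ev_mult)
  have "ev e p' / ev e q' = ev e p / ev e q"
    by (simp add: frac_eq_eq h(1) assms eq)
  then show "y = ev e p / ev e q" using h(3) by simp
qed

lemma goodI: "ev e q \<noteq> 0 \<Longrightarrow> good e (Fract p q)" unfolding good_def by blast

lemma goodE: assumes "good e x" obtains p q where "ev e q \<noteq> 0" "x = Fract p q"
  using assms unfolding good_def by blast

lemma good_0[simp]: "good e 0" and phi_0[simp]: "phi e 0 = 0"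
  by (simp_all add: Zero_fract_def goodI phi_Fract)

lemma good_1[simp]: "good e 1" and phi_1[simp]: "phi e 1 = 1"
  by (simp_all add: One_fract_def goodI phi_Fract)

lemma good_add:
  assumes "good e x" "good e y"
  shows "good e (x + y) \<and> phi e (x + y) = phi e x + phi e y"
proof -
  obtain p q where pq: "ev e q \<noteq> 0" "x = Fract p q" using assms(1) by (rule goodE)
  obtain p' q' where pq': "ev e q' \<noteq> 0" "y = Fract p' q'" using assms(2) by (rule goodE)
  have s: "x + y = Fract (p * q' + p' * q) (q * q')"
    using pq pq' by (simp add: ev_nz_imp_nz)
  have n: "ev e (q * q') \<noteq> 0" using pq pq' by (simp add: ev_mult)
  have "phi e (x + y) = (ev e p * ev e q' + ev e p' * ev e q) / (ev e q * ev e q')"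
    unfolding s phi_Fract[OF n] by (simp add: ev_add ev_mult)
  also have "\<dots> = phi e x + phi e y"
    using pq pq' by (simp add: phi_Fract add_divide_distrib)
  finally show ?thesis using s n goodI by metis
qed

lemma good_mult:
  assumes "good e x" "good e y"
  shows "good e (x * y) \<and> phi e (x * y) = phi e x * phi e y"
proof -
  obtain p q where pq: "ev e q \<noteq> 0" "x = Fract p q" using assms(1) by (rule goodE)
  obtain p' q' where pq': "ev e q' \<noteq> 0" "y = Fract p' q'" using assms(2) by (rule goodE)
  have s: "x * y = Fract (p * p') (q * q')" using pq pq' by simp
  have n: "ev e (q * q') \<noteq> 0" using pq pq' by (simp add: ev_mult)
  have "phi e (x * y) = phi e x * phi e y"
    unfolding s phi_Fract[OF n] using pq pq' by (simp add: ev_mult phi_Fract)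
  then show ?thesis using s n goodI by metis
qed

lemma good_uminus:
  assumes "good e x"
  shows "good e (- x) \<and> phi e (- x) = - phi e x"
proof -
  obtain p q where pq: "ev e q \<noteq> 0" "x = Fract p q" using assms(1) by (rule goodE)
  have s: "- x = Fract (- p) q" using pq by simp
  show ?thesis unfolding s using pq by (simp add: goodI phi_Fract ev_hom.hom_uminus)
qed

lemma good_inverse:
  assumes "good e x" "phi e x \<noteq> 0"
  shows "good e (inverse x) \<and> phi e (inverse x) = inverse (phi e x)"
proof -
  obtain p q where pq: "ev e q \<noteq> 0" "x = Fract p q" using assms(1) by (rule goodE)
  have "ev e p \<noteq> 0" using assms(2) pq by (simp add: phi_Fract)
  then show ?thesis using pq by (simp add: goodI phi_Fract)
qed

lemma phi_nz_imp_nz: "phi e x \<noteq> 0 \<Longrightarrow> x \<noteq> 0" by auto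

lemma good_of_int: "good e (of_int k) \<and> phi e (of_int k) = of_int k"
proof -
  have "(of_int k :: 'a ratfun) = Fract (of_int k) 1"
  proof (cases k rule: int_cases)
    case (nonneg n)
    then show ?thesis by (simp add: of_nat_fract)
  next
    case (neg n)
    then show ?thesis by (simp only: of_int_minus of_int_of_nat_eq of_nat_fract minus_fract)
  qed
  then show ?thesis by (simp add: goodI phi_Fract ev_hom.hom_of_int)
qed

lemma good_sum:
  "(\<And>i. i \<in> A \<Longrightarrow> good e (f i)) \<Longrightarrow> good e (sum f A) \<and> phi e (sum f A) = (\<Sum>i\<in>A. phi e (f i))"
  by (induction A rule: infinite_finite_induct) (auto simp: good_add)

lemma good_prod:
  "(\<And>i. i \<in> A \<Longrightarrow> good e (f i)) \<Longrightarrow> good e (prod f A) \<and> phi e (prod f A) = (\<Prod>i\<in>A. phi e (f i))"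
  by (induction A rule: infinite_finite_induct) (auto simp: good_mult)

lemma good_power:
  "good e x \<Longrightarrow> good e (x ^ k) \<and> phi e (x ^ k) = phi e x ^ k"
  by (induction k) (auto simp: good_mult)

lemma good_det:
  assumes A: "A \<in> carrier_mat n n" and g: "\<And>i j. i < n \<Longrightarrow> j < n \<Longrightarrow> good e (A $$ (i, j))"
  shows "good e (det A) \<and> phi e (det A) = det (map_mat (phi e) A)"
proof -
  have dA: "dim_row A = n" "dim_col A = n" using A by auto
  let ?P = "{p. p permutes {0..<n}}"
  have gt: "good e (signof p * (\<Prod>i = 0..<n. A $$ (i, p i))) \<and>
     phi e (signof p * (\<Prod>i = 0..<n. A $$ (i, p i))) = signof p * (\<Prod>i = 0..<n. phi e (A $$ (i, p i)))"
    if "p \<in> ?P" for p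
  proof -
    have pi: "i < n \<Longrightarrow> p i < n" for i using that permutes_in_image[of p "{0..<n}" i] by auto
    have gp: "good e (\<Prod>i = 0..<n. A $$ (i, p i)) \<and> phi e (\<Prod>i = 0..<n. A $$ (i, p i)) = (\<Prod>i = 0..<n. phi e (A $$ (i, p i)))"
      by (rule good_prod) (auto intro: g pi)
    have gs: "good e (signof p) \<and> phi e (signof p) = signof p"
      by (rule good_of_int)
    show ?thesis using good_mult[of e "signof p"] gp gs by auto
  qed
  have "good e (det A) \<and> phi e (det A) = (\<Sum>p\<in>?P. signof p * (\<Prod>i = 0..<n. phi e (A $$ (i, p i))))"
  proof -
    have "good e (\<Sum>p\<in>?P. signof p * (\<Prod>i = 0..<n. A $$ (i, p i))) \<and>
      phi e (\<Sum>p\<in>?P. signof p * (\<Prod>i = 0..<n. A $$ (i, p i))) =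
      (\<Sum>p\<in>?P. phi e (signof p * (\<Prod>i = 0..<n. A $$ (i, p i))))"
      by (rule good_sum) (use gt in blast)
    moreover have "(\<Sum>p\<in>?P. phi e (signof p * (\<Prod>i = 0..<n. A $$ (i, p i)))) =
       (\<Sum>p\<in>?P. signof p * (\<Prod>i = 0..<n. phi e (A $$ (i, p i))))"
      by (rule sum.cong) (use gt in auto)
    ultimately show ?thesis unfolding det_def dA by simp
  qed
  moreover have "det (map_mat (phi e) A) = (\<Sum>p\<in>?P. signof p * (\<Prod>i = 0..<n. phi e (A $$ (i, p i))))"
  proof -
    have "det (map_mat (phi e) A) = (\<Sum>p\<in>?P. signof p * (\<Prod>i = 0..<n. map_mat (phi e) A $$ (i, p i)))"
      unfolding det_def using dA by simp
    also have "\<dots> = (\<Sum>p\<in>?P. signof p * (\<Prod>i = 0..<n. phi e (A $$ (i, p i))))"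
    proof (rule sum.cong[OF refl])
      fix p assume p: "p \<in> ?P"
      have "(\<Prod>i = 0..<n. map_mat (phi e) A $$ (i, p i)) = (\<Prod>i = 0..<n. phi e (A $$ (i, p i)))"
      proof (rule prod.cong[OF refl])
        fix i assume "i \<in> {0..<n}"
        then have "p i < n" using p permutes_in_image[of p "{0..<n}" i] by auto
        then show "map_mat (phi e) A $$ (i, p i) = phi e (A $$ (i, p i))" using dA \<open>i \<in> _\<close> by simp
      qed
      then show "signof p * (\<Prod>i = 0..<n. map_mat (phi e) A $$ (i, p i)) = signof p * (\<Prod>i = 0..<n. phi e (A $$ (i, p i)))" by simp
    qed
    finally show ?thesis .
  qed
  ultimately show ?thesis by simp
qed





lemma hom_Mval:
  assumes "comm_ring_hom h"
  shows "h (Mval N eps i j x) = Mval N (h \<circ> eps) i j (h x)"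
proof -
  interpret comm_ring_hom h by fact
  show ?thesis
    unfolding Mval_def path_gain_def
    by (simp add: hom_sum hom_mult hom_prod hom_power)
qed

definition lec_poly :: "lecvar \<Rightarrow> 'f::field mpoly" where
  "lec_poly v = Poly_Mapping.single (Poly_Mapping.single v 1) 1"

definition emb :: "'f::field mpoly \<Rightarrow> 'f ratfun" where
  "emb p = Fract p 1"

lemma emb_hom: "comm_ring_hom (emb :: 'f::field mpoly \<Rightarrow> _)"
  by unfold_locales (simp_all add: emb_def One_fract_def Zero_fract_def)

lemma lec_indet_emb: "lec_indet = emb \<circ> lec_poly"
  by (simp add: fun_eq_iff lec_indet_def emb_def lec_poly_def)

lemma rconst_emb: "rconst c = emb (Poly_Mapping.single 0 c)"
  by (simp add: rconst_def emb_def)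

definition Pm :: "'v mun \<Rightarrow> 'f::field \<Rightarrow> nat \<Rightarrow> nat \<Rightarrow> nat \<Rightarrow> 'f mpoly" where
  "Pm N a i j r = Mval N lec_poly i j (Poly_Mapping.single 0 a ^ r)"

lemma Mval_generic:
  "Mval N lec_indet i j (rconst a ^ r) = emb (Pm N a i j r)"
proof -
  interpret comm_ring_hom emb by (rule emb_hom)
  show ?thesis unfolding Pm_def hom_Mval[OF emb_hom] lec_indet_emb rconst_emb hom_power ..
qed

lemma ev_lec_poly: "ev e \<circ> lec_poly = e"
  by (simp add: fun_eq_iff lec_poly_def)

lemma ev_Pm: "ev e (Pm N a i j r) = Mval N e i j (to_ac a ^ r)"
proof -
  have "comm_ring_hom (ev e)" by unfold_locales (simp_all add: ev_add ev_mult)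
  then show ?thesis
    unfolding Pm_def hom_Mval[OF \<open>comm_ring_hom (ev e)\<close>] ev_lec_poly
    by (simp add: ev_hom.hom_power)
qed




lemma path_distinct:
  assumes dag: "finite_dag N" and p: "is_path N es s t"
  shows "distinct es"
proof (rule ccontr)
  assume "\<not> distinct es"
  then obtain a b where ab: "a < b" "b < length es" "es ! a = es ! b"
    by (metis distinct_conv_nth linorder_neqE_nat)
  define sp where "sp = take (b - a) (drop a es)"
  have len: "length sp = b - a" using ab by (simp add: sp_def)
  have nth: "l < b - a \<Longrightarrow> sp ! l = es ! (a + l)" for l using ab by (simp add: sp_def)
  have pp: "is_path N sp (etail N (es ! a)) (etail N (es ! a))"
    unfolding is_path_def
  proof (intro conjI allI impI)
    show "sp \<noteq> []" using len ab by auto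
    have "set sp \<subseteq> set es" unfolding sp_def by (meson set_drop_subset set_take_subset subset_trans)
    then show "set sp \<subseteq> edges N" using p unfolding is_path_def by blast
    show "etail N (hd sp) = etail N (es ! a)"
      using nth[of 0] len ab \<open>sp \<noteq> []\<close> by (simp add: hd_conv_nth)
    have "last sp = es ! (b - 1)"
      using nth[of "b - a - 1"] len ab \<open>sp \<noteq> []\<close> by (simp add: last_conv_nth)
    moreover have "ehead N (es ! (b - 1)) = etail N (es ! b)"
      using p ab unfolding is_path_def by (metis Suc_diff_1 gr_implies_not0 neq0_conv)
    ultimately show "ehead N (last sp) = etail N (es ! a)" using ab by simp
  next
    fix l assume "Suc l < length sp"
    then show "ehead N (sp ! l) = etail N (sp ! Suc l)"
      using nth[of l] nth[of "Suc l"] len p ab unfolding is_path_def by auto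
  qed
  then show False using dag unfolding finite_dag_def by blast
qed

lemma paths_finite:
  assumes dag: "finite_dag N"
  shows "finite (paths N s t)"
proof -
  have fe: "finite (edges N)" using dag by (simp add: finite_dag_def)
  have "paths N s t \<subseteq> {xs. set xs \<subseteq> edges N \<and> length xs \<le> card (edges N)}"
  proof
    fix es assume "es \<in> paths N s t"
    then have p: "is_path N es s t" by (simp add: paths_def)
    then have d: "distinct es" using path_distinct[OF dag] by blast
    have s: "set es \<subseteq> edges N" using p by (simp add: is_path_def)
    have "length es = card (set es)" using d by (simp add: distinct_card)
    also have "\<dots> \<le> card (edges N)" by (rule card_mono[OF fe s])
    finally show "es \<in> {xs. set xs \<subseteq> edges N \<and> length xs \<le> card (edges N)}" using s by simp
  qed
  then show ?thesis using finite_lists_length_le[OF fe] by (rule finite_subset)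
qed

lemma path_exists:
  assumes "min_cut N s t \<ge> 1"
  shows "paths N s t \<noteq> {}"
proof
  assume np: "paths N s t = {}"
  have "\<exists>C \<subseteq> edges N. card C = 0 \<and> (\<forall>es. is_path N es s t \<longrightarrow> set es \<inter> C \<noteq> {})"
    using np by (intro exI[of _ "{}"]) (auto simp: paths_def)
  then have "min_cut N s t \<le> 0" unfolding min_cut_def by (rule Least_le)
  then show False using assms by simp
qed

definition msum :: "nat \<Rightarrow> nat \<Rightarrow> nat list \<Rightarrow> lecvar \<Rightarrow>\<^sub>0 nat" where
  "msum i j es = Poly_Mapping.single (src_var i (hd es)) 1
     + (\<Sum>l<length es - 1. Poly_Mapping.single (lnk_var (es ! l) (es ! Suc l)) 1)
     + Poly_Mapping.single (dst_var (last es) j) 1"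

lemma path_gain_mono: "path_gain e i j es = monoe e (msum i j es)"
  by (simp add: path_gain_def msum_def mono_add mono_sum)

lemma keys_add_nat: "Poly_Mapping.keys (a + b :: 'a \<Rightarrow>\<^sub>0 nat) = Poly_Mapping.keys a \<union> Poly_Mapping.keys b"
  by (auto simp: in_keys_iff lookup_add)

lemma keys_sum_nat:
  "finite L \<Longrightarrow> Poly_Mapping.keys (\<Sum>l\<in>L. f l :: 'a \<Rightarrow>\<^sub>0 nat) = (\<Union>l\<in>L. Poly_Mapping.keys (f l))"
  by (induction L rule: finite_induct) (auto simp: keys_add_nat)

definition pairs :: "'a list \<Rightarrow> ('a \<times> 'a) set" where
  "pairs xs = (\<lambda>l. (xs ! l, xs ! Suc l)) ` {..<length xs - 1}"

lemma keys_msum: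
  "Poly_Mapping.keys (msum i j es) = {src_var i (hd es)} \<union> (\<lambda>(a, b). lnk_var a b) ` pairs es \<union> {dst_var (last es) j}"
  unfolding msum_def keys_add_nat keys_sum_nat[OF finite_lessThan] pairs_def image_image by auto

lemma pairs_Cons: "pairs (a # t) = (if t = [] then {} else insert (a, hd t) (pairs t))"
proof (cases t)
  case Nil
  then show ?thesis by (simp add: pairs_def)
next
  case (Cons b u)
  have "pairs (a # t) = (\<lambda>l. ((a # t) ! l, (a # t) ! Suc l)) ` {..<Suc (length t - 1)}"
    unfolding pairs_def using Cons by simp
  also have "\<dots> = insert (a, hd t) (pairs t)"
    unfolding lessThan_Suc_eq_insert_0 image_insert image_image pairs_def using Cons by simp
  finally show ?thesis using Cons by simp
qed

lemma pairs_subset: "pairs xs \<subseteq> set xs \<times> set xs"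
  unfolding pairs_def by auto

lemma list_eq_pairs:
  "distinct xs \<Longrightarrow> distinct ys \<Longrightarrow> xs \<noteq> [] \<Longrightarrow> ys \<noteq> [] \<Longrightarrow> hd xs = hd ys \<Longrightarrow> pairs xs = pairs ys \<Longrightarrow> xs = ys"
proof (induction xs arbitrary: ys)
  case Nil
  then show ?case by simp
next
  case (Cons a xs)
  obtain ys' where ys: "ys = a # ys'" using Cons.prems by (cases ys) auto
  show ?case
  proof (cases "xs = []")
    case True
    then have "pairs (a # xs) = {}" by (simp add: pairs_Cons)
    then have "ys' = []" using Cons.prems(6) ys by (auto simp: pairs_Cons split: if_splits)
    then show ?thesis using True ys by simp
  next
    case False
    have ny: "ys' \<noteq> []"
    proof
      assume "ys' = []"
      then show False using Cons.prems(6) ys False by (simp add: pairs_Cons)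
    qed
    have P: "insert (a, hd xs) (pairs xs) = insert (a, hd ys') (pairs ys')"
      using Cons.prems(6) ys False ny by (simp add: pairs_Cons)
    have ax: "a \<notin> set xs" "a \<notin> set ys'" using Cons.prems(1,2) ys by auto
    have n1: "(a, z) \<notin> pairs xs" "(a, z) \<notin> pairs ys'" for z
      using pairs_subset[of xs] pairs_subset[of ys'] ax by auto
    have h: "hd xs = hd ys'" using P n1 by blast
    have "pairs xs = pairs ys'"
    proof -
      have "pairs xs = insert (a, hd xs) (pairs xs) - {(a, hd xs)}" using n1 by auto
      also have "\<dots> = insert (a, hd ys') (pairs ys') - {(a, hd ys')}" using P h by simp
      also have "\<dots> = pairs ys'" using n1 by auto
      finally show ?thesis .
    qed
    then have "xs = ys'"
      using Cons.IH[of ys'] Cons.prems(1,2) ys False ny h by simp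
    then show ?thesis using ys by simp
  qed
qed

lemma msum_inj:
  assumes dag: "finite_dag N"
  shows "inj_on (msum i j) (paths N s t)"
proof (rule inj_onI)
  fix es1 es2 assume p1: "es1 \<in> paths N s t" and p2: "es2 \<in> paths N s t" and eq: "msum i j es1 = msum i j es2"
  have pp1: "is_path N es1 s t" and pp2: "is_path N es2 s t" using p1 p2 by (auto simp: paths_def)
  have K: "Poly_Mapping.keys (msum i j es1) = Poly_Mapping.keys (msum i j es2)" using eq by simp
  have "src_var i (hd es1) \<in> Poly_Mapping.keys (msum i j es2)" using K keys_msum[of i j es1] by auto
  then have hd: "hd es1 = hd es2"
    unfolding keys_msum by (auto simp: src_var_def lnk_var_def dst_var_def)
  have lk: "(a, b) \<in> pairs es \<longleftrightarrow> lnk_var a b \<in> Poly_Mapping.keys (msum i j es)" for a b es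
    unfolding keys_msum by (force simp: src_var_def lnk_var_def dst_var_def)
  have "pairs es1 = pairs es2" using K lk by auto
  then show "es1 = es2"
    using list_eq_pairs[of es1 es2] path_distinct[OF dag pp1] path_distinct[OF dag pp2] pp1 pp2 hd
    by (simp add: is_path_def)
qed

lemma Mval_nonvanish:
  fixes x :: "'a::field"
  assumes dag: "finite_dag N" and ne: "paths N (src N i) (dst N j) \<noteq> {}" and x: "x \<noteq> 0"
    and inf: "infinite (UNIV :: 'a set)"
  shows "\<exists>e. Mval N e i j x \<noteq> 0"
proof -
  let ?P = "paths N (src N i) (dst N j)"
  have fin: "finite ?P" by (rule paths_finite[OF dag])
  obtain es0 where es0: "es0 \<in> ?P" using ne by blast
  define c where "c es = x ^ (length es + 1 - dmin N)" for es :: "nat list"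
  have Mv: "Mval N e i j x = (\<Sum>es\<in>?P. c es * monoe e (msum i j es))" for e
    unfolding Mval_def c_def path_gain_mono by (simp add: mult.commute)
  have S: "{es\<in>?P. msum i j es = msum i j es0} = {es0}"
    using msum_inj[OF dag, of i j] es0 by (auto dest: inj_onD)
  have "\<exists>e. (\<Sum>es\<in>?P. c es * monoe e (msum i j es)) \<noteq> 0"
  proof (rule nonvanish_gen[OF inf _ fin])
    show "finite (\<Union>es\<in>?P. Poly_Mapping.keys (msum i j es))" using fin by simp
    show "\<forall>es\<in>?P. Poly_Mapping.keys (msum i j es) \<subseteq> (\<Union>es\<in>?P. Poly_Mapping.keys (msum i j es))" by blast
    show "(\<Sum>es\<in>{es\<in>?P. msum i j es = msum i j es0}. c es) \<noteq> 0" unfolding S using x by (simp add: c_def)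
  qed
  then show ?thesis using Mv by simp
qed




definition dg :: "nat \<Rightarrow> (nat \<Rightarrow> 'k::comm_ring_1) \<Rightarrow> 'k mat" where
  "dg n f = mat n n (\<lambda>(r, c). if r = c then f r else 0)"

lemma dg_carrier[simp]: "dg n f \<in> carrier_mat n n" "dim_row (dg n f) = n" "dim_col (dg n f) = n"
  by (auto simp: dg_def)

lemma dg_index[simp]: "r < n \<Longrightarrow> c < n \<Longrightarrow> dg n f $$ (r, c) = (if r = c then f r else 0)"
  by (simp add: dg_def)

lemma sum_delta_left: fixes a :: "'a::comm_ring_1" and n :: nat shows "r < n \<Longrightarrow> (\<Sum>k = 0..<n. (if r = k then a else 0) * h k) = a * h r"
proof -
  assume r: "r < n"
  have "(\<Sum>k = 0..<n. (if r = k then a else 0) * h k) = (\<Sum>k = 0..<n. if k = r then a * h k else 0)"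
    by (rule sum.cong) auto
  also have "\<dots> = a * h r" using r by (simp add: sum.delta)
  finally show ?thesis .
qed

lemma sum_delta_right: fixes a :: "'a::comm_ring_1" and n :: nat shows "c < n \<Longrightarrow> (\<Sum>k = 0..<n. h k * (if k = c then a else 0)) = h c * a"
proof -
  assume r: "c < n"
  have "(\<Sum>k = 0..<n. h k * (if k = c then a else 0)) = (\<Sum>k = 0..<n. if k = c then h k * a else 0)"
    by (rule sum.cong) auto
  also have "\<dots> = h c * a" using r by (simp add: sum.delta)
  finally show ?thesis .
qed

lemma dg_mult_mat:
  assumes "A \<in> carrier_mat n m"
  shows "dg n f * A = mat n m (\<lambda>(r, c). f r * A $$ (r, c))"
proof (rule eq_matI)
  fix r c assume rc: "r < dim_row (mat n m (\<lambda>(r, c). f r * A $$ (r, c)))"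
    "c < dim_col (mat n m (\<lambda>(r, c). f r * A $$ (r, c)))"
  then have r: "r < n" and c: "c < m" by auto
  have "(dg n f * A) $$ (r, c) = (\<Sum>k = 0..<n. (if r = k then f r else 0) * A $$ (k, c))"
    using assms r c by (simp add: scalar_prod_def)
  also have "\<dots> = f r * A $$ (r, c)" using r by (rule sum_delta_left)
  finally show "(dg n f * A) $$ (r, c) = mat n m (\<lambda>(r, c). f r * A $$ (r, c)) $$ (r, c)"
    using r c by simp
qed (use assms in auto)

lemma dg_mult: "dg n f * dg n g = dg n (\<lambda>r. f r * g r)"
  by (subst dg_mult_mat[of _ n n]) (auto intro!: eq_matI simp: dg_def)

lemma dg_mult_vec:
  assumes "v \<in> carrier_vec n"
  shows "dg n f *\<^sub>v v = vec n (\<lambda>r. f r * v $ r)"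
proof (rule eq_vecI)
  fix r assume "r < dim_vec (vec n (\<lambda>r. f r * v $ r))"
  then have r: "r < n" by simp
  have "(dg n f *\<^sub>v v) $ r = (\<Sum>k = 0..<n. (if r = k then f r else 0) * v $ k)"
    using assms r by (simp add: scalar_prod_def)
  also have "\<dots> = f r * v $ r" using r by (rule sum_delta_left)
  finally show "(dg n f *\<^sub>v v) $ r = vec n (\<lambda>r. f r * v $ r) $ r" using r by simp
qed (use assms in auto)

lemma dg_one: "1\<^sub>m n = dg n (\<lambda>_. 1)"
  by (auto intro!: eq_matI simp: dg_def)

lemma dg_pow: "dg n f ^\<^sub>m k = dg n (\<lambda>r. f r ^ k)"
  by (induction k) (simp_all add: dg_one dg_mult mult.commute)

lemma dg_inverse:
  fixes f :: "nat \<Rightarrow> 'k::field"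
  assumes "\<forall>r<n. f r \<noteq> 0"
  shows "dg n f * dg n (\<lambda>r. inverse (f r)) = 1\<^sub>m n" "dg n (\<lambda>r. inverse (f r)) * dg n f = 1\<^sub>m n"
proof -
  have "dg n (\<lambda>r. f r * inverse (f r)) = dg n (\<lambda>_. 1)" "dg n (\<lambda>r. inverse (f r) * f r) = dg n (\<lambda>_. 1)"
    using assms by (auto simp: dg_def intro!: eq_matI)
  then show "dg n f * dg n (\<lambda>r. inverse (f r)) = 1\<^sub>m n" "dg n (\<lambda>r. inverse (f r)) * dg n f = 1\<^sub>m n"
    by (simp_all add: dg_mult dg_one)
qed

lemma minv_dg:
  fixes f :: "nat \<Rightarrow> 'k::field"
  assumes nz: "\<forall>r<n. f r \<noteq> 0"
  shows "minv (dg n f) = dg n (\<lambda>r. inverse (f r))"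
proof (cases "mat_inverse (dg n f)")
  case None
  have "dg n f \<notin> Units (ring_mat TYPE('k) n ())"
    by (rule mat_inverse(1)[OF dg_carrier(1) None])
  moreover have "dg n f \<in> Units (ring_mat TYPE('k) n ())"
    using dg_inverse[OF nz] unfolding Units_def ring_mat_def
    by (auto intro!: bexI[of _ "dg n (\<lambda>r. inverse (f r))"])
  ultimately show ?thesis by blast
next
  case (Some B)
  then have B: "dg n f * B = 1\<^sub>m n" "B \<in> carrier_mat n n"
    using mat_inverse(2)[OF dg_carrier(1)] by auto
  let ?I = "dg n (\<lambda>r. inverse (f r))"
  have "B = (?I * dg n f) * B" using dg_inverse(2)[OF nz] B by simp
  also have "\<dots> = ?I * (dg n f * B)" using B by (simp add: assoc_mult_mat[of _ n n _ n _ n])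
  also have "\<dots> = ?I" using B by simp
  finally show ?thesis using Some by (simp add: minv_def)
qed

lemma invertible_dg:
  fixes f :: "nat \<Rightarrow> 'k::field"
  assumes nz: "\<forall>r<n. f r \<noteq> 0"
  shows "invertible_mat (dg n f)"
  unfolding invertible_mat_def inverts_mat_def using dg_inverse[OF nz]
  by (auto simp: square_mat.simps)




definition dd :: "'v mun \<Rightarrow> (lecvar \<Rightarrow> 'k::comm_ring_1) \<Rightarrow> 'k \<Rightarrow> nat \<Rightarrow> nat \<Rightarrow> nat \<Rightarrow> 'k" where
  "dd N eps a i j r = Mval N eps i j (a ^ r)"

definition uu :: "(nat \<Rightarrow> nat \<Rightarrow> nat \<Rightarrow> 'k::field) \<Rightarrow> nat \<Rightarrow> 'k" where
  "uu d r = inverse (d 1 2 r) * d 3 2 r * inverse (d 3 1 r) * d 2 1 r * inverse (d 2 3 r) * d 1 3 r"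

definition RR :: "(nat \<Rightarrow> nat \<Rightarrow> nat \<Rightarrow> 'k::field) \<Rightarrow> nat \<Rightarrow> 'k" where
  "RR d r = d 1 3 r * inverse (d 2 3 r)"

definition SS :: "(nat \<Rightarrow> nat \<Rightarrow> nat \<Rightarrow> 'k::field) \<Rightarrow> nat \<Rightarrow> 'k" where
  "SS d r = d 1 2 r * inverse (d 3 2 r)"

definition nzd :: "(nat \<Rightarrow> nat \<Rightarrow> nat \<Rightarrow> 'k::field) \<Rightarrow> nat \<Rightarrow> bool" where
  "nzd d n \<longleftrightarrow> (\<forall>i j r. i \<in> {1,2,3} \<longrightarrow> j \<in> {1,2,3} \<longrightarrow> r < n \<longrightarrow> d i j r \<noteq> 0)"

lemma Mhat_dg: "Mhat N eps a n i j = dg n (dd N eps a i j)"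
  unfolding Mhat_def dg_def dd_def ..

lemma minv_dg_dd:
  assumes "nzd (dd N eps a) n" "i \<in> {1,2,3}" "j \<in> {1,2,3}"
  shows "minv (dg n (dd N eps a i j)) = dg n (\<lambda>r. inverse (dd N eps a i j r))"
  using assms by (intro minv_dg) (auto simp: nzd_def)

lemma minv_Mhat:
  assumes "nzd (dd N eps a) n" "i \<in> {1,2,3}" "j \<in> {1,2,3}"
  shows "minv (Mhat N eps a n i j) = dg n (\<lambda>r. inverse (dd N eps a i j r))"
  unfolding Mhat_dg using assms by (intro minv_dg) (auto simp: nzd_def)

lemma Uhat_dg:
  assumes "nzd (dd N eps a) n"
  shows "Uhat N eps a n = dg n (uu (dd N eps a))"
  unfolding Uhat_def using assms by (simp add: minv_dg_dd Mhat_dg dg_mult uu_def[abs_def])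

lemma Rhat_dg:
  assumes "nzd (dd N eps a) n"
  shows "Rhat N eps a n = dg n (RR (dd N eps a))"
  unfolding Rhat_def using assms by (simp add: minv_dg_dd Mhat_dg dg_mult RR_def[abs_def])

lemma Shat_dg:
  assumes "nzd (dd N eps a) n"
  shows "Shat N eps a n = dg n (SS (dd N eps a))"
  unfolding Shat_def using assms by (simp add: minv_dg_dd Mhat_dg dg_mult SS_def[abs_def])

lemma Wvec_carrier[simp]: "Wvec n \<in> carrier_vec n" by (simp add: Wvec_def)

lemma UkW:
  assumes "nzd (dd N eps a) n"
  shows "(Uhat N eps a n ^\<^sub>m k) *\<^sub>v Wvec n = vec n (\<lambda>r. uu (dd N eps a) r ^ k)"
  using assms by (intro eq_vecI) (simp_all add: Uhat_dg dg_pow dg_mult_vec Wvec_def)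

lemma moc_carrier: "mat_of_cols n (map f [0..<m]) \<in> carrier_mat n m"
  using mat_of_cols_carrier(1)[of n "map f [0..<m]"] by simp

lemma moc_index: "r < n \<Longrightarrow> k < m \<Longrightarrow> mat_of_cols n (map f [0..<m]) $$ (r, k) = f k $ r"
  by (simp add: mat_of_cols_index)

lemma V1_carrier: "V1 N eps a n' \<in> carrier_mat (2 * n' + 1) (n' + 1)"
  unfolding V1_def Let_def by (rule moc_carrier)

lemma V2_carrier: "V2 N eps a n' \<in> carrier_mat (2 * n' + 1) n'"
  unfolding V2_def Let_def by (rule moc_carrier)

lemma V3_carrier: "V3 N eps a n' \<in> carrier_mat (2 * n' + 1) n'"
  unfolding V3_def Let_def by (rule moc_carrier)

lemma V1_index:
  assumes "nzd (dd N eps a) (2 * n' + 1)" "r < 2 * n' + 1" "k < n' + 1"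
  shows "V1 N eps a n' $$ (r, k) = uu (dd N eps a) r ^ k"
proof -
  have "V1 N eps a n' $$ (r, k) = ((Uhat N eps a (2 * n' + 1) ^\<^sub>m k) *\<^sub>v Wvec (2 * n' + 1)) $ r"
    unfolding V1_def Let_def using assms(2,3)
    by (rule moc_index)
  also have "\<dots> = uu (dd N eps a) r ^ k" using assms by (simp only: UkW index_vec)
  finally show ?thesis .
qed

lemma V2_index:
  assumes "nzd (dd N eps a) (2 * n' + 1)" "r < 2 * n' + 1" "k < n'"
  shows "V2 N eps a n' $$ (r, k) = RR (dd N eps a) r * uu (dd N eps a) r ^ k"
proof -
  have "V2 N eps a n' $$ (r, k) = (Rhat N eps a (2 * n' + 1) *\<^sub>v ((Uhat N eps a (2 * n' + 1) ^\<^sub>m k) *\<^sub>v Wvec (2 * n' + 1))) $ r"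
    unfolding V2_def Let_def using assms(2,3)
    by (rule moc_index)
  also have "\<dots> = RR (dd N eps a) r * uu (dd N eps a) r ^ k"
    using assms by (simp only: UkW Rhat_dg dg_mult_vec[OF vec_carrier] index_vec)
  finally show ?thesis .
qed

lemma V3_index:
  assumes "nzd (dd N eps a) (2 * n' + 1)" "r < 2 * n' + 1" "k < n'"
  shows "V3 N eps a n' $$ (r, k) = SS (dd N eps a) r * uu (dd N eps a) r ^ (k + 1)"
proof -
  have "V3 N eps a n' $$ (r, k) = (Shat N eps a (2 * n' + 1) *\<^sub>v ((Uhat N eps a (2 * n' + 1) ^\<^sub>m (k + 1)) *\<^sub>v Wvec (2 * n' + 1))) $ r"
    unfolding V3_def Let_def using assms(2,3)
    by (rule moc_index)
  also have "\<dots> = SS (dd N eps a) r * uu (dd N eps a) r ^ (k + 1)"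
    using assms by (simp only: UkW Shat_dg dg_mult_vec[OF vec_carrier] index_vec)
  finally show ?thesis .
qed

lemma hcat_carrier:
  assumes "A \<in> carrier_mat n p" "B \<in> carrier_mat n q"
  shows "hcat n A B \<in> carrier_mat n (p + q)"
proof -
  have "length (cols A @ cols B) = p + q" using assms by simp
  then show ?thesis unfolding hcat_def using mat_of_cols_carrier(1)[of n "cols A @ cols B"] by simp
qed

lemma hcat_index:
  assumes A: "A \<in> carrier_mat n p" and B: "B \<in> carrier_mat n q" and r: "r < n" and c: "c < p + q"
  shows "hcat n A B $$ (r, c) = (if c < p then A $$ (r, c) else B $$ (r, c - p))"
proof -
  have l: "length (cols A @ cols B) = p + q" "length (cols A) = p" using A B by simp_all
  have "hcat n A B $$ (r, c) = (cols A @ cols B) ! c $ r"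
    unfolding hcat_def using r c l by (intro mat_of_cols_index) simp_all
  also have "\<dots> = (if c < p then A $$ (r, c) else B $$ (r, c - p))"
  proof (cases "c < p")
    case True
    then show ?thesis using A r l by (simp add: nth_append)
  next
    case False
    then have "c - p < q" using c by simp
    then show ?thesis using False B r l by (simp add: nth_append)
  qed
  finally show ?thesis .
qed

lemma hcat_mult_vec:
  assumes A: "A \<in> carrier_mat n p" and B: "B \<in> carrier_mat n q"
    and x: "x \<in> carrier_vec p" and y: "y \<in> carrier_vec q"
  shows "hcat n A B *\<^sub>v (x @\<^sub>v y) = A *\<^sub>v x + B *\<^sub>v y"
proof (rule eq_vecI)
  show "dim_vec (hcat n A B *\<^sub>v (x @\<^sub>v y)) = dim_vec (A *\<^sub>v x + B *\<^sub>v y)"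
    using hcat_carrier[OF A B] A B by simp
next
  fix r assume "r < dim_vec (A *\<^sub>v x + B *\<^sub>v y)"
  then have r: "r < n" using A B by simp
  have H: "hcat n A B \<in> carrier_mat n (p + q)" by (rule hcat_carrier[OF A B])
  have dxy: "dim_vec (x @\<^sub>v y) = p + q" using x y by simp
  let ?f = "\<lambda>c. hcat n A B $$ (r, c) * (x @\<^sub>v y) $ c"
  have "(hcat n A B *\<^sub>v (x @\<^sub>v y)) $ r = (\<Sum>c = 0..<p + q. ?f c)"
    using H r dxy by (simp add: scalar_prod_def)
  also have "\<dots> = (\<Sum>c = 0..<p. ?f c) + (\<Sum>c = p..<p + q. ?f c)"
    by (rule sum.atLeastLessThan_concat[symmetric]) auto
  also have "(\<Sum>c = 0..<p. ?f c) = (\<Sum>c = 0..<p. A $$ (r, c) * x $ c)"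
  proof (rule sum.cong[OF refl])
    fix c assume "c \<in> {0..<p}"
    then have c: "c < p" by simp
    then show "?f c = A $$ (r, c) * x $ c" using hcat_index[OF A B r, of c] x y dxy by simp
  qed
  also have "(\<Sum>c = p..<p + q. ?f c) = (\<Sum>c = 0..<q. ?f (c + p))"
    using sum.shift_bounds_nat_ivl[of ?f 0 p q] by (simp add: add.commute)
  also have "\<dots> = (\<Sum>c = 0..<q. B $$ (r, c) * y $ c)"
  proof (rule sum.cong[OF refl])
    fix c assume "c \<in> {0..<q}"
    then have c: "c < q" by simp
    then show "?f (c + p) = B $$ (r, c) * y $ c" using hcat_index[OF A B r, of "c + p"] x y dxy by simp
  qed
  also have "(\<Sum>c = 0..<p. A $$ (r, c) * x $ c) + (\<Sum>c = 0..<q. B $$ (r, c) * y $ c) = (A *\<^sub>v x + B *\<^sub>v y) $ r"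
    using A B x y r by (simp add: scalar_prod_def)
  finally show "(hcat n A B *\<^sub>v (x @\<^sub>v y)) $ r = (A *\<^sub>v x + B *\<^sub>v y) $ r" .
qed




lemma dg_cong: "(\<And>r. r < n \<Longrightarrow> f r = g r) \<Longrightarrow> dg n f = dg n g"
  by (auto simp: dg_def intro!: eq_matI)

lemma nzdD:
  assumes "nzd d n" "i \<in> {1,2,3}" "j \<in> {1,2,3}" "r < n"
  shows "d i j r \<noteq> 0"
  using assms(1)[unfolded nzd_def, rule_format, OF assms(2) assms(3) assms(4)] .

lemma mult_index_sum:
  assumes "A \<in> carrier_mat n m" "B \<in> carrier_mat m p" "r < n" "l < p"
  shows "(A * B) $$ (r, l) = (\<Sum>k = 0..<m. A $$ (r, k) * B $$ (k, l))"
proof -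
  have d: "dim_row A = n" "dim_col A = m" "dim_row B = m" "dim_col B = p" using assms(1,2) by auto
  have "(A * B) $$ (r, l) = row A r \<bullet> col B l" using assms(3,4) d by simp
  also have "\<dots> = (\<Sum>k = 0..<m. row A r $ k * col B l $ k)" unfolding scalar_prod_def using d by simp
  also have "\<dots> = (\<Sum>k = 0..<m. A $$ (r, k) * B $$ (k, l))"
    using assms(3,4) d by (intro sum.cong refl) simp
  finally show ?thesis .
qed

definition Sh :: "nat \<Rightarrow> 'k::comm_ring_1 mat" where
  "Sh n' = mat (n' + 1) n' (\<lambda>(k, l). if k = l + 1 then 1 else 0)"

definition Pd :: "nat \<Rightarrow> 'k::comm_ring_1 mat" where
  "Pd n' = mat (n' + 1) n' (\<lambda>(k, l). if k = l then 1 else 0)"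

lemma Sh_carrier: "Sh n' \<in> carrier_mat (n' + 1) n'" by (simp add: Sh_def)
lemma Pd_carrier: "Pd n' \<in> carrier_mat (n' + 1) n'" by (simp add: Pd_def)

lemma V1_Sh_index:
  assumes nz: "nzd (dd N eps a) (2 * n' + 1)" and r: "r < 2 * n' + 1" and l: "l < n'"
  shows "(V1 N eps a n' * Sh n') $$ (r, l) = uu (dd N eps a) r ^ (l + 1)"
proof -
  have "(V1 N eps a n' * Sh n') $$ (r, l) = (\<Sum>k = 0..<n' + 1. V1 N eps a n' $$ (r, k) * Sh n' $$ (k, l))"
    using V1_carrier[of N eps a n'] Sh_carrier[of n'] r l by (rule mult_index_sum)
  also have "\<dots> = (\<Sum>k = 0..<n' + 1. uu (dd N eps a) r ^ k * (if k = l + 1 then 1 else 0))"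
    using nz r l by (intro sum.cong refl) (simp add: V1_index Sh_def)
  also have "\<dots> = uu (dd N eps a) r ^ (l + 1)"
    using l by (subst sum_delta_right) simp_all
  finally show ?thesis .
qed

lemma V1_Pd_index:
  assumes nz: "nzd (dd N eps a) (2 * n' + 1)" and r: "r < 2 * n' + 1" and l: "l < n'"
  shows "(V1 N eps a n' * Pd n') $$ (r, l) = uu (dd N eps a) r ^ l"
proof -
  have "(V1 N eps a n' * Pd n') $$ (r, l) = (\<Sum>k = 0..<n' + 1. V1 N eps a n' $$ (r, k) * Pd n' $$ (k, l))"
    using V1_carrier[of N eps a n'] Pd_carrier[of n'] r l by (rule mult_index_sum)
  also have "\<dots> = (\<Sum>k = 0..<n' + 1. uu (dd N eps a) r ^ k * (if k = l then 1 else 0))"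
    using nz r l by (intro sum.cong refl) (simp add: V1_index Pd_def)
  also have "\<dots> = uu (dd N eps a) r ^ l"
    using l by (subst sum_delta_right) simp_all
  finally show ?thesis .
qed

lemma align1:
  assumes nz: "nzd (dd N eps a) (2 * n' + 1)"
  shows "dg (2 * n' + 1) (dd N eps a 3 1) * V3 N eps a n' = dg (2 * n' + 1) (dd N eps a 2 1) * V2 N eps a n'"
proof -
  let ?d = "dd N eps a"
  show ?thesis
    unfolding dg_mult_mat[OF V3_carrier] dg_mult_mat[OF V2_carrier]
  proof (rule eq_matI)
    fix r c assume "r < dim_row (mat (2 * n' + 1) n' (\<lambda>(r, c). ?d 2 1 r * V2 N eps a n' $$ (r, c)))"
      "c < dim_col (mat (2 * n' + 1) n' (\<lambda>(r, c). ?d 2 1 r * V2 N eps a n' $$ (r, c)))"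
    then have r: "r < 2 * n' + 1" and c: "c < n'" by auto
    have nzs: "?d i j r \<noteq> 0" if "i \<in> {1,2,3}" "j \<in> {1,2,3}" for i j using nzdD[OF nz that r] .
    have core: "?d 3 1 r * SS ?d r * uu ?d r = ?d 2 1 r * RR ?d r"
      using nzs[of 1 2] nzs[of 3 2] nzs[of 3 1] nzs[of 2 3]
      unfolding SS_def RR_def uu_def by (simp add: field_simps)
    have "?d 3 1 r * (SS ?d r * uu ?d r ^ (c + 1)) = (?d 3 1 r * SS ?d r * uu ?d r) * uu ?d r ^ c"
      by (simp add: mult_ac)
    also have "\<dots> = ?d 2 1 r * (RR ?d r * uu ?d r ^ c)" unfolding core by (simp add: mult_ac)
    finally have "?d 3 1 r * (SS ?d r * uu ?d r ^ (c + 1)) = ?d 2 1 r * (RR ?d r * uu ?d r ^ c)" .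
    then show "mat (2 * n' + 1) n' (\<lambda>(r, c). ?d 3 1 r * V3 N eps a n' $$ (r, c)) $$ (r, c) =
      mat (2 * n' + 1) n' (\<lambda>(r, c). ?d 2 1 r * V2 N eps a n' $$ (r, c)) $$ (r, c)"
      using r c nz by (simp add: V3_index V2_index)
  qed auto
qed

lemma align2:
  assumes nz: "nzd (dd N eps a) (2 * n' + 1)"
  shows "dg (2 * n' + 1) (dd N eps a 3 2) * V3 N eps a n' = dg (2 * n' + 1) (dd N eps a 1 2) * (V1 N eps a n' * Sh n')"
proof -
  let ?d = "dd N eps a"
  have VS: "V1 N eps a n' * Sh n' \<in> carrier_mat (2 * n' + 1) n'"
    using V1_carrier Sh_carrier by (rule mult_carrier_mat)
  show ?thesis
    unfolding dg_mult_mat[OF V3_carrier] dg_mult_mat[OF VS]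
  proof (rule eq_matI)
    fix r c assume "r < dim_row (mat (2 * n' + 1) n' (\<lambda>(r, c). ?d 1 2 r * (V1 N eps a n' * Sh n') $$ (r, c)))"
      "c < dim_col (mat (2 * n' + 1) n' (\<lambda>(r, c). ?d 1 2 r * (V1 N eps a n' * Sh n') $$ (r, c)))"
    then have r: "r < 2 * n' + 1" and c: "c < n'" by auto
    have nzs: "?d i j r \<noteq> 0" if "i \<in> {1,2,3}" "j \<in> {1,2,3}" for i j using nzdD[OF nz that r] .
    have "?d 3 2 r * (SS ?d r * uu ?d r ^ (c + 1)) = ?d 1 2 r * uu ?d r ^ (c + 1)"
      using nzs[of 1 2] nzs[of 3 2] unfolding SS_def by (simp add: mult.assoc[symmetric])
    then show "mat (2 * n' + 1) n' (\<lambda>(r, c). ?d 3 2 r * V3 N eps a n' $$ (r, c)) $$ (r, c) =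
      mat (2 * n' + 1) n' (\<lambda>(r, c). ?d 1 2 r * (V1 N eps a n' * Sh n') $$ (r, c)) $$ (r, c)"
      using r c nz by (simp add: V3_index V1_Sh_index)
  qed auto
qed

lemma align3:
  assumes nz: "nzd (dd N eps a) (2 * n' + 1)"
  shows "dg (2 * n' + 1) (dd N eps a 2 3) * V2 N eps a n' = dg (2 * n' + 1) (dd N eps a 1 3) * (V1 N eps a n' * Pd n')"
proof -
  let ?d = "dd N eps a"
  have VS: "V1 N eps a n' * Pd n' \<in> carrier_mat (2 * n' + 1) n'"
    using V1_carrier Pd_carrier by (rule mult_carrier_mat)
  show ?thesis
    unfolding dg_mult_mat[OF V2_carrier] dg_mult_mat[OF VS]
  proof (rule eq_matI)
    fix r c assume "r < dim_row (mat (2 * n' + 1) n' (\<lambda>(r, c). ?d 1 3 r * (V1 N eps a n' * Pd n') $$ (r, c)))"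
      "c < dim_col (mat (2 * n' + 1) n' (\<lambda>(r, c). ?d 1 3 r * (V1 N eps a n' * Pd n') $$ (r, c)))"
    then have r: "r < 2 * n' + 1" and c: "c < n'" by auto
    have nzs: "?d i j r \<noteq> 0" if "i \<in> {1,2,3}" "j \<in> {1,2,3}" for i j using nzdD[OF nz that r] .
    have "?d 2 3 r * (RR ?d r * uu ?d r ^ c) = ?d 1 3 r * uu ?d r ^ c"
      using nzs[of 2 3] unfolding RR_def by (simp add: mult.assoc[symmetric])
    then show "mat (2 * n' + 1) n' (\<lambda>(r, c). ?d 2 3 r * V2 N eps a n' $$ (r, c)) $$ (r, c) =
      mat (2 * n' + 1) n' (\<lambda>(r, c). ?d 1 3 r * (V1 N eps a n' * Pd n') $$ (r, c)) $$ (r, c)"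
      using r c nz by (simp add: V2_index V1_Pd_index)
  qed auto
qed




lemma decode:
  fixes M Mi H :: "'k::field mat"
  assumes M: "M \<in> carrier_mat n n" and Mi: "Mi \<in> carrier_mat n n" "Mi * M = 1\<^sub>m n"
    and H: "H \<in> carrier_mat n n" and dH: "det H \<noteq> 0" and pq: "p + q = n"
  shows "\<exists>G. G \<in> carrier_mat p n \<and>
    (\<forall>x y. x \<in> carrier_vec p \<longrightarrow> y \<in> carrier_vec q \<longrightarrow> G *\<^sub>v (M *\<^sub>v (H *\<^sub>v (x @\<^sub>v y))) = x)"
proof -
  have "H \<in> Units (ring_mat TYPE('k) n ())" by (rule det_non_zero_imp_unit[OF H dH])
  then obtain Hi where Hi: "Hi \<in> carrier_mat n n" "Hi * H = 1\<^sub>m n"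
    unfolding Units_def ring_mat_def by auto
  define P :: "'k mat" where "P = mat p n (\<lambda>(r, c). if r = c then 1 else 0)"
  have P: "P \<in> carrier_mat p n" by (simp add: P_def)
  define G where "G = P * Hi * Mi"
  have G: "G \<in> carrier_mat p n" unfolding G_def using P Hi Mi by auto
  show ?thesis
  proof (intro exI conjI allI impI)
    show "G \<in> carrier_mat p n" by (rule G)
    fix x y :: "'k vec" assume x: "x \<in> carrier_vec p" and y: "y \<in> carrier_vec q"
    define z where "z = x @\<^sub>v y"
    have z: "z \<in> carrier_vec n" unfolding z_def using x y pq by auto
    have Hz: "H *\<^sub>v z \<in> carrier_vec n" using H z by simp
    have "Mi *\<^sub>v (M *\<^sub>v (H *\<^sub>v z)) = (Mi * M) *\<^sub>v (H *\<^sub>v z)" by (rule assoc_mult_mat_vec[symmetric, OF Mi(1) M Hz])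
    also have "\<dots> = H *\<^sub>v z" using Mi(2) Hz by simp
    finally have e1: "Mi *\<^sub>v (M *\<^sub>v (H *\<^sub>v z)) = H *\<^sub>v z" .
    have "Hi *\<^sub>v (H *\<^sub>v z) = (Hi * H) *\<^sub>v z" by (rule assoc_mult_mat_vec[symmetric, OF Hi(1) H z])
    also have "\<dots> = z" using Hi(2) z by simp
    finally have e2: "Hi *\<^sub>v (H *\<^sub>v z) = z" .
    have MHz: "M *\<^sub>v (H *\<^sub>v z) \<in> carrier_vec n" using M Hz by simp
    have "G *\<^sub>v (M *\<^sub>v (H *\<^sub>v z)) = P *\<^sub>v (Hi *\<^sub>v (Mi *\<^sub>v (M *\<^sub>v (H *\<^sub>v z))))"
    proof -
      have "P * Hi * Mi *\<^sub>v (M *\<^sub>v (H *\<^sub>v z)) = (P * Hi) *\<^sub>v (Mi *\<^sub>v (M *\<^sub>v (H *\<^sub>v z)))"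
        by (rule assoc_mult_mat_vec[OF mult_carrier_mat[OF P Hi(1)] Mi(1) MHz])
      also have "\<dots> = P *\<^sub>v (Hi *\<^sub>v (Mi *\<^sub>v (M *\<^sub>v (H *\<^sub>v z))))"
        by (rule assoc_mult_mat_vec[OF P Hi(1)]) (use Mi(1) MHz in simp)
      finally show ?thesis unfolding G_def .
    qed
    also have "\<dots> = P *\<^sub>v z" using e1 e2 by simp
    also have "\<dots> = x"
    proof (rule eq_vecI)
      fix r assume "r < dim_vec x"
      then have r: "r < p" using x by simp
      have "(P *\<^sub>v z) $ r = (\<Sum>c = 0..<n. (if r = c then 1 else 0) * z $ c)"
        using r z by (simp add: P_def scalar_prod_def)
      also have "\<dots> = 1 * z $ r" using r pq by (intro sum_delta_left) simp
      also have "\<dots> = x $ r" using r x unfolding z_def by simp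
      finally show "(P *\<^sub>v z) $ r = x $ r" .
    qed (use P x in simp)
    finally show "G *\<^sub>v (M *\<^sub>v (H *\<^sub>v (x @\<^sub>v y))) = x" unfolding z_def .
  qed
qed

lemma dg_times_dg_mat:
  assumes "A \<in> carrier_mat n m"
  shows "dg n f * (dg n g * A) = dg n (\<lambda>r. f r * g r) * A"
  using assms by (simp add: assoc_mult_mat[symmetric, of _ n n _ n A m] dg_mult)

lemma minv_Mhat_prod:
  assumes nz: "nzd (dd N eps a) n" "i \<in> {1,2,3}" "j \<in> {1,2,3}"
  shows "minv (Mhat N eps a n i j) * Mhat N eps a n k l = dg n (\<lambda>r. inverse (dd N eps a i j r) * dd N eps a k l r)"
  using assms by (simp add: Mhat_dg minv_dg_dd dg_mult)

lemma cancel_dg: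
  assumes nz: "nzd (dd N eps a) n" "i \<in> {1,2,3}" "j \<in> {1,2,3}"
  shows "dg n (\<lambda>r. dd N eps a i j r * (inverse (dd N eps a i j r) * dd N eps a k l r)) = dg n (dd N eps a k l)"
  using nzdD[OF nz] by (intro dg_cong) simp




lemma Y1:
  assumes nz: "nzd (dd N eps a) (2 * n' + 1)"
    and x1: "x1 \<in> carrier_vec (n' + 1)" and x2: "x2 \<in> carrier_vec n'" and x3: "x3 \<in> carrier_vec n'"
  shows "Mhat N eps a (2 * n' + 1) 1 1 *\<^sub>v (V1 N eps a n' *\<^sub>v x1)
       + Mhat N eps a (2 * n' + 1) 2 1 *\<^sub>v (V2 N eps a n' *\<^sub>v x2)
       + Mhat N eps a (2 * n' + 1) 3 1 *\<^sub>v (V3 N eps a n' *\<^sub>v x3)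
     = Mhat N eps a (2 * n' + 1) 1 1 *\<^sub>v (hcat (2 * n' + 1) (V1 N eps a n')
         (minv (Mhat N eps a (2 * n' + 1) 1 1) * Mhat N eps a (2 * n' + 1) 2 1 * V2 N eps a n')
         *\<^sub>v (x1 @\<^sub>v (x2 + x3)))"
proof -
  let ?n = "2 * n' + 1"
  let ?d = "dd N eps a"
  define D11 where "D11 = dg ?n (?d 1 1)"
  define D21 where "D21 = dg ?n (?d 2 1)"
  define D31 where "D31 = dg ?n (?d 3 1)"
  define A1 where "A1 = V1 N eps a n'"
  define A2 where "A2 = V2 N eps a n'"
  define A3 where "A3 = V3 N eps a n'"
  have c: "A1 \<in> carrier_mat ?n (n' + 1)" "A2 \<in> carrier_mat ?n n'" "A3 \<in> carrier_mat ?n n'"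
    unfolding A1_def A2_def A3_def by (rule V1_carrier V2_carrier V3_carrier)+
  have cD: "D11 \<in> carrier_mat ?n ?n" "D21 \<in> carrier_mat ?n ?n" "D31 \<in> carrier_mat ?n ?n"
    unfolding D11_def D21_def D31_def by simp_all
  define K where "K = dg ?n (\<lambda>r. inverse (?d 1 1 r) * ?d 2 1 r) * A2"
  have Keq: "minv (Mhat N eps a ?n 1 1) * Mhat N eps a ?n 2 1 * V2 N eps a n' = K"
    unfolding K_def A2_def using nz by (simp add: minv_Mhat_prod)
  have cK: "K \<in> carrier_mat ?n n'" unfolding K_def by (rule mult_carrier_mat[OF dg_carrier(1) c(2)])
  have cc: "dg ?n (\<lambda>r. ?d 1 1 r * (inverse (?d 1 1 r) * ?d 2 1 r)) = dg ?n (?d 2 1)"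
    by (rule cancel_dg[OF nz]) simp_all
  have DK: "D11 * K = D21 * A2"
    unfolding D11_def K_def D21_def dg_times_dg_mat[OF c(2)] cc ..
  have al: "D31 * A3 = D21 * A2" unfolding D31_def D21_def A3_def A2_def by (rule align1[OF nz])
  have "hcat ?n A1 K *\<^sub>v (x1 @\<^sub>v (x2 + x3)) = A1 *\<^sub>v x1 + K *\<^sub>v (x2 + x3)"
    using c(1) cK x1 x2 x3 by (intro hcat_mult_vec) auto
  then have "D11 *\<^sub>v (hcat ?n A1 K *\<^sub>v (x1 @\<^sub>v (x2 + x3))) = D11 *\<^sub>v (A1 *\<^sub>v x1) + D11 *\<^sub>v (K *\<^sub>v (x2 + x3))"
    using cD c cK x1 x2 x3 by (simp add: mult_add_distrib_mat_vec[OF cD(1)])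
  also have "D11 *\<^sub>v (K *\<^sub>v (x2 + x3)) = (D21 * A2) *\<^sub>v (x2 + x3)"
    using cD(1) cK x2 x3 DK by (simp add: assoc_mult_mat_vec[symmetric, of D11 ?n ?n K n'])
  also have "\<dots> = D21 *\<^sub>v (A2 *\<^sub>v x2) + D31 *\<^sub>v (A3 *\<^sub>v x3)"
  proof -
    have "(D21 * A2) *\<^sub>v (x2 + x3) = (D21 * A2) *\<^sub>v x2 + (D21 * A2) *\<^sub>v x3"
      using cD c x2 x3 by (intro mult_add_distrib_mat_vec) auto
    also have "(D21 * A2) *\<^sub>v x2 = D21 *\<^sub>v (A2 *\<^sub>v x2)" using cD c x2 by simp
    also have "(D21 * A2) *\<^sub>v x3 = D31 *\<^sub>v (A3 *\<^sub>v x3)" using cD c x3 al[symmetric] by simp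
    finally show ?thesis .
  qed
  finally have R: "D11 *\<^sub>v (hcat ?n A1 K *\<^sub>v (x1 @\<^sub>v (x2 + x3))) =
     D11 *\<^sub>v (A1 *\<^sub>v x1) + (D21 *\<^sub>v (A2 *\<^sub>v x2) + D31 *\<^sub>v (A3 *\<^sub>v x3))" .
  show ?thesis
    unfolding Keq unfolding Mhat_dg D11_def[symmetric] D21_def[symmetric] D31_def[symmetric]
      A1_def[symmetric] A2_def[symmetric] A3_def[symmetric] R
    using cD c x1 x2 x3 by (intro assoc_add_vec[of _ ?n]) auto
qed


lemma Y2:
  assumes nz: "nzd (dd N eps a) (2 * n' + 1)"
    and x1: "x1 \<in> carrier_vec (n' + 1)" and x2: "x2 \<in> carrier_vec n'" and x3: "x3 \<in> carrier_vec n'"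
  shows "Mhat N eps a (2 * n' + 1) 1 2 *\<^sub>v (V1 N eps a n' *\<^sub>v x1)
       + Mhat N eps a (2 * n' + 1) 2 2 *\<^sub>v (V2 N eps a n' *\<^sub>v x2)
       + Mhat N eps a (2 * n' + 1) 3 2 *\<^sub>v (V3 N eps a n' *\<^sub>v x3)
     = Mhat N eps a (2 * n' + 1) 1 2 *\<^sub>v (hcat (2 * n' + 1)
         (minv (Mhat N eps a (2 * n' + 1) 1 2) * Mhat N eps a (2 * n' + 1) 2 2 * V2 N eps a n')
         (V1 N eps a n') *\<^sub>v (x2 @\<^sub>v (x1 + Sh n' *\<^sub>v x3)))"
proof -
  let ?n = "2 * n' + 1"
  let ?d = "dd N eps a"
  define D12 where "D12 = dg ?n (?d 1 2)"
  define D22 where "D22 = dg ?n (?d 2 2)"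
  define D32 where "D32 = dg ?n (?d 3 2)"
  define A1 where "A1 = V1 N eps a n'"
  define A2 where "A2 = V2 N eps a n'"
  define A3 where "A3 = V3 N eps a n'"
  have c: "A1 \<in> carrier_mat ?n (n' + 1)" "A2 \<in> carrier_mat ?n n'" "A3 \<in> carrier_mat ?n n'"
    unfolding A1_def A2_def A3_def by (rule V1_carrier V2_carrier V3_carrier)+
  have cD: "D12 \<in> carrier_mat ?n ?n" "D22 \<in> carrier_mat ?n ?n" "D32 \<in> carrier_mat ?n ?n"
    unfolding D12_def D22_def D32_def by simp_all
  have cS: "Sh n' \<in> carrier_mat (n' + 1) n'" by (rule Sh_carrier)
  define K where "K = dg ?n (\<lambda>r. inverse (?d 1 2 r) * ?d 2 2 r) * A2"
  have Keq: "minv (Mhat N eps a ?n 1 2) * Mhat N eps a ?n 2 2 * V2 N eps a n' = K"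
    unfolding K_def A2_def using nz by (simp add: minv_Mhat_prod)
  have cK: "K \<in> carrier_mat ?n n'" unfolding K_def by (rule mult_carrier_mat[OF dg_carrier(1) c(2)])
  have cc: "dg ?n (\<lambda>r. ?d 1 2 r * (inverse (?d 1 2 r) * ?d 2 2 r)) = dg ?n (?d 2 2)"
    by (rule cancel_dg[OF nz]) simp_all
  have DK: "D12 * K = D22 * A2"
    unfolding D12_def K_def D22_def dg_times_dg_mat[OF c(2)] cc ..
  have al: "D32 * A3 = D12 * (A1 * Sh n')" unfolding D32_def D12_def A3_def A1_def by (rule align2[OF nz])
  have w: "x1 + Sh n' *\<^sub>v x3 \<in> carrier_vec (n' + 1)" by (rule add_carrier_vec[OF x1 mult_mat_vec_carrier[OF cS x3]])
  have "hcat ?n K A1 *\<^sub>v (x2 @\<^sub>v (x1 + Sh n' *\<^sub>v x3)) = K *\<^sub>v x2 + A1 *\<^sub>v (x1 + Sh n' *\<^sub>v x3)"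
    using c(1) cK x2 w by (intro hcat_mult_vec) auto
  then have "D12 *\<^sub>v (hcat ?n K A1 *\<^sub>v (x2 @\<^sub>v (x1 + Sh n' *\<^sub>v x3)))
      = D12 *\<^sub>v (K *\<^sub>v x2) + D12 *\<^sub>v (A1 *\<^sub>v (x1 + Sh n' *\<^sub>v x3))"
    using cD c cK x2 w by (simp add: mult_add_distrib_mat_vec[OF cD(1)])
  also have "D12 *\<^sub>v (K *\<^sub>v x2) = D22 *\<^sub>v (A2 *\<^sub>v x2)"
    using cD cK c x2 DK by (simp add: assoc_mult_mat_vec[symmetric, of D12 ?n ?n K n'])
  also have "D12 *\<^sub>v (A1 *\<^sub>v (x1 + Sh n' *\<^sub>v x3)) = D12 *\<^sub>v (A1 *\<^sub>v x1) + D32 *\<^sub>v (A3 *\<^sub>v x3)"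
  proof -
    have "A1 *\<^sub>v (x1 + Sh n' *\<^sub>v x3) = A1 *\<^sub>v x1 + A1 *\<^sub>v (Sh n' *\<^sub>v x3)"
      using c x1 x3 cS mult_mat_vec_carrier[OF cS x3] by (intro mult_add_distrib_mat_vec) auto
    then have "D12 *\<^sub>v (A1 *\<^sub>v (x1 + Sh n' *\<^sub>v x3)) = D12 *\<^sub>v (A1 *\<^sub>v x1) + D12 *\<^sub>v (A1 *\<^sub>v (Sh n' *\<^sub>v x3))"
      using cD c x1 x3 cS mult_mat_vec_carrier[OF cS x3] by (simp add: mult_add_distrib_mat_vec[OF cD(1)])
    also have "D12 *\<^sub>v (A1 *\<^sub>v (Sh n' *\<^sub>v x3)) = (D12 * (A1 * Sh n')) *\<^sub>v x3"
      using assoc_mult_mat_vec[OF cD(1) mult_carrier_mat[OF c(1) cS] x3] assoc_mult_mat_vec[OF c(1) cS x3] by simp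
    also have "\<dots> = D32 *\<^sub>v (A3 *\<^sub>v x3)" using al[symmetric] cD c x3 by simp
    finally show ?thesis .
  qed
  finally have R: "D12 *\<^sub>v (hcat ?n K A1 *\<^sub>v (x2 @\<^sub>v (x1 + Sh n' *\<^sub>v x3))) =
     D22 *\<^sub>v (A2 *\<^sub>v x2) + (D12 *\<^sub>v (A1 *\<^sub>v x1) + D32 *\<^sub>v (A3 *\<^sub>v x3))" .
  have va: "D12 *\<^sub>v (A1 *\<^sub>v x1) \<in> carrier_vec ?n" "D22 *\<^sub>v (A2 *\<^sub>v x2) \<in> carrier_vec ?n"
      "D32 *\<^sub>v (A3 *\<^sub>v x3) \<in> carrier_vec ?n" using cD c x1 x2 x3 by auto
  show ?thesis
    unfolding Keq unfolding Mhat_dg D12_def[symmetric] D22_def[symmetric] D32_def[symmetric]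
      A1_def[symmetric] A2_def[symmetric] A3_def[symmetric] R
    using va by (simp add: comm_add_vec[OF va(1) va(2)] assoc_add_vec[of _ ?n])
qed

lemma Y3:
  assumes nz: "nzd (dd N eps a) (2 * n' + 1)"
    and x1: "x1 \<in> carrier_vec (n' + 1)" and x2: "x2 \<in> carrier_vec n'" and x3: "x3 \<in> carrier_vec n'"
  shows "Mhat N eps a (2 * n' + 1) 1 3 *\<^sub>v (V1 N eps a n' *\<^sub>v x1)
       + Mhat N eps a (2 * n' + 1) 2 3 *\<^sub>v (V2 N eps a n' *\<^sub>v x2)
       + Mhat N eps a (2 * n' + 1) 3 3 *\<^sub>v (V3 N eps a n' *\<^sub>v x3)
     = Mhat N eps a (2 * n' + 1) 1 3 *\<^sub>v (hcat (2 * n' + 1)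
         (minv (Mhat N eps a (2 * n' + 1) 1 3) * Mhat N eps a (2 * n' + 1) 3 3 * V3 N eps a n')
         (V1 N eps a n') *\<^sub>v (x3 @\<^sub>v (x1 + Pd n' *\<^sub>v x2)))"
proof -
  let ?n = "2 * n' + 1"
  let ?d = "dd N eps a"
  define D13 where "D13 = dg ?n (?d 1 3)"
  define D23 where "D23 = dg ?n (?d 2 3)"
  define D33 where "D33 = dg ?n (?d 3 3)"
  define A1 where "A1 = V1 N eps a n'"
  define A2 where "A2 = V2 N eps a n'"
  define A3 where "A3 = V3 N eps a n'"
  have c: "A1 \<in> carrier_mat ?n (n' + 1)" "A2 \<in> carrier_mat ?n n'" "A3 \<in> carrier_mat ?n n'"
    unfolding A1_def A2_def A3_def by (rule V1_carrier V2_carrier V3_carrier)+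
  have cD: "D13 \<in> carrier_mat ?n ?n" "D23 \<in> carrier_mat ?n ?n" "D33 \<in> carrier_mat ?n ?n"
    unfolding D13_def D23_def D33_def by simp_all
  have cS: "Pd n' \<in> carrier_mat (n' + 1) n'" by (rule Pd_carrier)
  define K where "K = dg ?n (\<lambda>r. inverse (?d 1 3 r) * ?d 3 3 r) * A3"
  have Keq: "minv (Mhat N eps a ?n 1 3) * Mhat N eps a ?n 3 3 * V3 N eps a n' = K"
    unfolding K_def A3_def using nz by (simp add: minv_Mhat_prod)
  have cK: "K \<in> carrier_mat ?n n'" unfolding K_def by (rule mult_carrier_mat[OF dg_carrier(1) c(3)])
  have cc: "dg ?n (\<lambda>r. ?d 1 3 r * (inverse (?d 1 3 r) * ?d 3 3 r)) = dg ?n (?d 3 3)"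
    by (rule cancel_dg[OF nz]) simp_all
  have DK: "D13 * K = D33 * A3"
    unfolding D13_def K_def D33_def dg_times_dg_mat[OF c(3)] cc ..
  have al: "D23 * A2 = D13 * (A1 * Pd n')" unfolding D23_def D13_def A2_def A1_def by (rule align3[OF nz])
  have w: "x1 + Pd n' *\<^sub>v x2 \<in> carrier_vec (n' + 1)" by (rule add_carrier_vec[OF x1 mult_mat_vec_carrier[OF cS x2]])
  have "hcat ?n K A1 *\<^sub>v (x3 @\<^sub>v (x1 + Pd n' *\<^sub>v x2)) = K *\<^sub>v x3 + A1 *\<^sub>v (x1 + Pd n' *\<^sub>v x2)"
    using c(1) cK x3 w by (intro hcat_mult_vec) auto
  then have "D13 *\<^sub>v (hcat ?n K A1 *\<^sub>v (x3 @\<^sub>v (x1 + Pd n' *\<^sub>v x2)))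
      = D13 *\<^sub>v (K *\<^sub>v x3) + D13 *\<^sub>v (A1 *\<^sub>v (x1 + Pd n' *\<^sub>v x2))"
    using cD c cK x3 w by (simp add: mult_add_distrib_mat_vec[OF cD(1)])
  also have "D13 *\<^sub>v (K *\<^sub>v x3) = D33 *\<^sub>v (A3 *\<^sub>v x3)"
    using cD cK c x3 DK by (simp add: assoc_mult_mat_vec[symmetric, of D13 ?n ?n K n'])
  also have "D13 *\<^sub>v (A1 *\<^sub>v (x1 + Pd n' *\<^sub>v x2)) = D13 *\<^sub>v (A1 *\<^sub>v x1) + D23 *\<^sub>v (A2 *\<^sub>v x2)"
  proof -
    have "A1 *\<^sub>v (x1 + Pd n' *\<^sub>v x2) = A1 *\<^sub>v x1 + A1 *\<^sub>v (Pd n' *\<^sub>v x2)"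
      using c x1 x2 cS mult_mat_vec_carrier[OF cS x2] by (intro mult_add_distrib_mat_vec) auto
    then have "D13 *\<^sub>v (A1 *\<^sub>v (x1 + Pd n' *\<^sub>v x2)) = D13 *\<^sub>v (A1 *\<^sub>v x1) + D13 *\<^sub>v (A1 *\<^sub>v (Pd n' *\<^sub>v x2))"
      using cD c x1 x2 cS mult_mat_vec_carrier[OF cS x2] by (simp add: mult_add_distrib_mat_vec[OF cD(1)])
    also have "D13 *\<^sub>v (A1 *\<^sub>v (Pd n' *\<^sub>v x2)) = (D13 * (A1 * Pd n')) *\<^sub>v x2"
      using assoc_mult_mat_vec[OF cD(1) mult_carrier_mat[OF c(1) cS] x2] assoc_mult_mat_vec[OF c(1) cS x2] by simp
    also have "\<dots> = D23 *\<^sub>v (A2 *\<^sub>v x2)" using al[symmetric] cD c x2 by simp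
    finally show ?thesis .
  qed
  finally have R: "D13 *\<^sub>v (hcat ?n K A1 *\<^sub>v (x3 @\<^sub>v (x1 + Pd n' *\<^sub>v x2))) =
     D33 *\<^sub>v (A3 *\<^sub>v x3) + (D13 *\<^sub>v (A1 *\<^sub>v x1) + D23 *\<^sub>v (A2 *\<^sub>v x2))" .
  have va: "D13 *\<^sub>v (A1 *\<^sub>v x1) \<in> carrier_vec ?n" "D23 *\<^sub>v (A2 *\<^sub>v x2) \<in> carrier_vec ?n"
      "D33 *\<^sub>v (A3 *\<^sub>v x3) \<in> carrier_vec ?n" using cD c x1 x2 x3 by auto
  have ab: "D13 *\<^sub>v (A1 *\<^sub>v x1) + D23 *\<^sub>v (A2 *\<^sub>v x2) \<in> carrier_vec ?n" using va by simp
  show ?thesis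
    unfolding Keq unfolding Mhat_dg D13_def[symmetric] D23_def[symmetric] D33_def[symmetric]
      A1_def[symmetric] A2_def[symmetric] A3_def[symmetric] R
    using va by (simp add: comm_add_vec[OF ab va(3)])
qed




definition E1 :: "nat \<Rightarrow> (nat \<Rightarrow> nat \<Rightarrow> nat \<Rightarrow> 'k::field) \<Rightarrow> nat \<Rightarrow> nat \<Rightarrow> 'k" where
  "E1 n' d r c = (if c < n' + 1 then uu d r ^ c
     else inverse (d 1 1 r) * d 2 1 r * (RR d r * uu d r ^ (c - (n' + 1))))"

definition E2 :: "nat \<Rightarrow> (nat \<Rightarrow> nat \<Rightarrow> nat \<Rightarrow> 'k::field) \<Rightarrow> nat \<Rightarrow> nat \<Rightarrow> 'k" where
  "E2 n' d r c = (if c < n' then inverse (d 1 2 r) * d 2 2 r * (RR d r * uu d r ^ c)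
     else uu d r ^ (c - n'))"

definition E3 :: "nat \<Rightarrow> (nat \<Rightarrow> nat \<Rightarrow> nat \<Rightarrow> 'k::field) \<Rightarrow> nat \<Rightarrow> nat \<Rightarrow> 'k" where
  "E3 n' d r c = (if c < n' then inverse (d 1 3 r) * d 3 3 r * (SS d r * uu d r ^ (c + 1))
     else uu d r ^ (c - n'))"

lemma H1_index:
  assumes nz: "nzd (dd N eps a) (2 * n' + 1)" and r: "r < 2 * n' + 1" and c: "c < 2 * n' + 1"
  shows "hcat (2 * n' + 1) (V1 N eps a n')
     (minv (Mhat N eps a (2 * n' + 1) 1 1) * Mhat N eps a (2 * n' + 1) 2 1 * V2 N eps a n') $$ (r, c)
     = E1 n' (dd N eps a) r c"
proof -
  let ?n = "2 * n' + 1"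
  have K: "minv (Mhat N eps a ?n 1 1) * Mhat N eps a ?n 2 1 * V2 N eps a n' = dg ?n (\<lambda>r. inverse (dd N eps a 1 1 r) * dd N eps a 2 1 r) * V2 N eps a n'"
    using nz by (simp add: minv_Mhat_prod)
  have cK: "dg ?n (\<lambda>r. inverse (dd N eps a 1 1 r) * dd N eps a 2 1 r) * V2 N eps a n' \<in> carrier_mat ?n n'"
    by (rule mult_carrier_mat[OF dg_carrier(1) V2_carrier])
  have c': "c < (n' + 1) + n'" using c by simp
  let ?K = "dg ?n (\<lambda>r. inverse (dd N eps a 1 1 r) * dd N eps a 2 1 r) * V2 N eps a n'"
  have h: "hcat ?n (V1 N eps a n') (dg ?n (\<lambda>r. inverse (dd N eps a 1 1 r) * dd N eps a 2 1 r) * V2 N eps a n') $$ (r, c) = (if c < n' + 1 then (V1 N eps a n') $$ (r, c) else (dg ?n (\<lambda>r. inverse (dd N eps a 1 1 r) * dd N eps a 2 1 r) * V2 N eps a n') $$ (r, c - (n' + 1)))"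
    by (rule hcat_index[OF V1_carrier cK r c'])
  have k: "(?K) $$ (r, c') = inverse (dd N eps a 1 1 r) * dd N eps a 2 1 r * V2 N eps a n' $$ (r, c')" if "c' < n'" for c'
    unfolding dg_mult_mat[OF V2_carrier] using r that by simp
  show ?thesis unfolding K h using k nz r c by (simp add: E1_def V1_index V2_index )
qed

lemma H2_index:
  assumes nz: "nzd (dd N eps a) (2 * n' + 1)" and r: "r < 2 * n' + 1" and c: "c < 2 * n' + 1"
  shows "hcat (2 * n' + 1)
     (minv (Mhat N eps a (2 * n' + 1) 1 2) * Mhat N eps a (2 * n' + 1) 2 2 * V2 N eps a n') (V1 N eps a n') $$ (r, c)
     = E2 n' (dd N eps a) r c"
proof -
  let ?n = "2 * n' + 1"
  have K: "minv (Mhat N eps a ?n 1 2) * Mhat N eps a ?n 2 2 * V2 N eps a n' = dg ?n (\<lambda>r. inverse (dd N eps a 1 2 r) * dd N eps a 2 2 r) * V2 N eps a n'"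
    using nz by (simp add: minv_Mhat_prod)
  have cK: "dg ?n (\<lambda>r. inverse (dd N eps a 1 2 r) * dd N eps a 2 2 r) * V2 N eps a n' \<in> carrier_mat ?n n'"
    by (rule mult_carrier_mat[OF dg_carrier(1) V2_carrier])
  have c': "c < n' + (n' + 1)" using c by simp
  let ?K = "dg ?n (\<lambda>r. inverse (dd N eps a 1 2 r) * dd N eps a 2 2 r) * V2 N eps a n'"
  have h: "hcat ?n (dg ?n (\<lambda>r. inverse (dd N eps a 1 2 r) * dd N eps a 2 2 r) * V2 N eps a n') (V1 N eps a n') $$ (r, c) = (if c < n' then (dg ?n (\<lambda>r. inverse (dd N eps a 1 2 r) * dd N eps a 2 2 r) * V2 N eps a n') $$ (r, c) else (V1 N eps a n') $$ (r, c - (n')))"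
    by (rule hcat_index[OF cK V1_carrier r c'])
  have k: "(?K) $$ (r, c') = inverse (dd N eps a 1 2 r) * dd N eps a 2 2 r * V2 N eps a n' $$ (r, c')" if "c' < n'" for c'
    unfolding dg_mult_mat[OF V2_carrier] using r that by simp
  show ?thesis unfolding K h using k nz r c by (simp add: E2_def V1_index V2_index )
qed

lemma H3_index:
  assumes nz: "nzd (dd N eps a) (2 * n' + 1)" and r: "r < 2 * n' + 1" and c: "c < 2 * n' + 1"
  shows "hcat (2 * n' + 1)
     (minv (Mhat N eps a (2 * n' + 1) 1 3) * Mhat N eps a (2 * n' + 1) 3 3 * V3 N eps a n') (V1 N eps a n') $$ (r, c)
     = E3 n' (dd N eps a) r c"
proof -
  let ?n = "2 * n' + 1"
  have K: "minv (Mhat N eps a ?n 1 3) * Mhat N eps a ?n 3 3 * V3 N eps a n' = dg ?n (\<lambda>r. inverse (dd N eps a 1 3 r) * dd N eps a 3 3 r) * V3 N eps a n'"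
    using nz by (simp add: minv_Mhat_prod)
  have cK: "dg ?n (\<lambda>r. inverse (dd N eps a 1 3 r) * dd N eps a 3 3 r) * V3 N eps a n' \<in> carrier_mat ?n n'"
    by (rule mult_carrier_mat[OF dg_carrier(1) V3_carrier])
  have c': "c < n' + (n' + 1)" using c by simp
  let ?K = "dg ?n (\<lambda>r. inverse (dd N eps a 1 3 r) * dd N eps a 3 3 r) * V3 N eps a n'"
  have h: "hcat ?n (dg ?n (\<lambda>r. inverse (dd N eps a 1 3 r) * dd N eps a 3 3 r) * V3 N eps a n') (V1 N eps a n') $$ (r, c) = (if c < n' then (dg ?n (\<lambda>r. inverse (dd N eps a 1 3 r) * dd N eps a 3 3 r) * V3 N eps a n') $$ (r, c) else (V1 N eps a n') $$ (r, c - (n')))"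
    by (rule hcat_index[OF cK V1_carrier r c'])
  have k: "(?K) $$ (r, c') = inverse (dd N eps a 1 3 r) * dd N eps a 3 3 r * V3 N eps a n' $$ (r, c')" if "c' < n'" for c'
    unfolding dg_mult_mat[OF V3_carrier] using r that by simp
  show ?thesis unfolding K h using k nz r c by (simp add: E3_def V1_index V3_index del: power_Suc)
qed

lemma H1_carrier:
  assumes nz: "nzd (dd N eps a) (2 * n' + 1)"
  shows "hcat (2 * n' + 1) (V1 N eps a n')
     (minv (Mhat N eps a (2 * n' + 1) 1 1) * Mhat N eps a (2 * n' + 1) 2 1 * V2 N eps a n')
     \<in> carrier_mat (2 * n' + 1) (2 * n' + 1)"
proof -
  let ?n = "2 * n' + 1"
  have K: "minv (Mhat N eps a ?n 1 1) * Mhat N eps a ?n 2 1 * V2 N eps a n' = dg ?n (\<lambda>r. inverse (dd N eps a 1 1 r) * dd N eps a 2 1 r) * V2 N eps a n'"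
    using nz by (simp add: minv_Mhat_prod)
  have cK: "dg ?n (\<lambda>r. inverse (dd N eps a 1 1 r) * dd N eps a 2 1 r) * V2 N eps a n' \<in> carrier_mat ?n n'"
    by (rule mult_carrier_mat[OF dg_carrier(1) V2_carrier])
  have "(n' + 1) + n' = ?n" by simp
  then show ?thesis unfolding K using hcat_carrier[OF V1_carrier cK] by metis
qed

lemma H2_carrier:
  assumes nz: "nzd (dd N eps a) (2 * n' + 1)"
  shows "hcat (2 * n' + 1)
     (minv (Mhat N eps a (2 * n' + 1) 1 2) * Mhat N eps a (2 * n' + 1) 2 2 * V2 N eps a n') (V1 N eps a n')
     \<in> carrier_mat (2 * n' + 1) (2 * n' + 1)"
proof -
  let ?n = "2 * n' + 1"
  have K: "minv (Mhat N eps a ?n 1 2) * Mhat N eps a ?n 2 2 * V2 N eps a n' = dg ?n (\<lambda>r. inverse (dd N eps a 1 2 r) * dd N eps a 2 2 r) * V2 N eps a n'"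
    using nz by (simp add: minv_Mhat_prod)
  have cK: "dg ?n (\<lambda>r. inverse (dd N eps a 1 2 r) * dd N eps a 2 2 r) * V2 N eps a n' \<in> carrier_mat ?n n'"
    by (rule mult_carrier_mat[OF dg_carrier(1) V2_carrier])
  have "n' + (n' + 1) = ?n" by simp
  then show ?thesis unfolding K using hcat_carrier[OF cK V1_carrier] by metis
qed

lemma H3_carrier:
  assumes nz: "nzd (dd N eps a) (2 * n' + 1)"
  shows "hcat (2 * n' + 1)
     (minv (Mhat N eps a (2 * n' + 1) 1 3) * Mhat N eps a (2 * n' + 1) 3 3 * V3 N eps a n') (V1 N eps a n')
     \<in> carrier_mat (2 * n' + 1) (2 * n' + 1)"
proof -
  let ?n = "2 * n' + 1"
  have K: "minv (Mhat N eps a ?n 1 3) * Mhat N eps a ?n 3 3 * V3 N eps a n' = dg ?n (\<lambda>r. inverse (dd N eps a 1 3 r) * dd N eps a 3 3 r) * V3 N eps a n'"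
    using nz by (simp add: minv_Mhat_prod)
  have cK: "dg ?n (\<lambda>r. inverse (dd N eps a 1 3 r) * dd N eps a 3 3 r) * V3 N eps a n' \<in> carrier_mat ?n n'"
    by (rule mult_carrier_mat[OF dg_carrier(1) V3_carrier])
  have "n' + (n' + 1) = ?n" by simp
  then show ?thesis unfolding K using hcat_carrier[OF cK V1_carrier] by metis
qed




definition gp :: "(lecvar \<Rightarrow> 'f::field alg_closure) \<Rightarrow> 'f ratfun \<Rightarrow> 'f alg_closure \<Rightarrow> bool" where
  "gp e x y \<longleftrightarrow> good e x \<and> phi e x = y"

lemma gp_mult: "gp e x y \<Longrightarrow> gp e x' y' \<Longrightarrow> gp e (x * x') (y * y')"
  unfolding gp_def using good_mult by blast

lemma gp_inv: "gp e x y \<Longrightarrow> y \<noteq> 0 \<Longrightarrow> gp e (inverse x) (inverse y)"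
  unfolding gp_def using good_inverse by blast

lemma gp_pow: "gp e x y \<Longrightarrow> gp e (x ^ k) (y ^ k)"
  unfolding gp_def using good_power by blast

lemma E_transfer:
  assumes g: "\<And>i j. i \<in> {1,2,3} \<Longrightarrow> j \<in> {1,2,3} \<Longrightarrow> gp e (dG i j r) (dE i j r)"
    and nz: "\<And>i j. i \<in> {1,2,3} \<Longrightarrow> j \<in> {1,2,3} \<Longrightarrow> dE i j r \<noteq> 0"
  shows "gp e (E1 n' dG r c) (E1 n' dE r c)" "gp e (E2 n' dG r c) (E2 n' dE r c)"
    "gp e (E3 n' dG r c) (E3 n' dE r c)"
proof -
  have gi: "gp e (inverse (dG i j r)) (inverse (dE i j r))" if "i \<in> {1,2,3}" "j \<in> {1,2,3}" for i j
    using gp_inv[OF g[OF that] nz[OF that]] .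
  have gu: "gp e (uu dG r) (uu dE r)"
    unfolding uu_def by (intro gp_mult gi g) simp_all
  have gR: "gp e (RR dG r) (RR dE r)"
    unfolding RR_def by (intro gp_mult gi g) simp_all
  have gS: "gp e (SS dG r) (SS dE r)"
    unfolding SS_def by (intro gp_mult gi g) simp_all
  have a1: "gp e (inverse (dG 1 1 r) * dG 2 1 r * (RR dG r * uu dG r ^ k))
      (inverse (dE 1 1 r) * dE 2 1 r * (RR dE r * uu dE r ^ k))" for k
    by (intro gp_mult gi g gR gp_pow gu) simp_all
  have a2: "gp e (inverse (dG 1 2 r) * dG 2 2 r * (RR dG r * uu dG r ^ k))
      (inverse (dE 1 2 r) * dE 2 2 r * (RR dE r * uu dE r ^ k))" for k
    by (intro gp_mult gi g gR gp_pow gu) simp_all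
  have a3: "gp e (inverse (dG 1 3 r) * dG 3 3 r * (SS dG r * uu dG r ^ k))
      (inverse (dE 1 3 r) * dE 3 3 r * (SS dE r * uu dE r ^ k))" for k
    by (intro gp_mult gi g gS gp_pow gu) simp_all
  have up: "gp e (uu dG r ^ k) (uu dE r ^ k)" for k by (rule gp_pow[OF gu])
  show "gp e (E1 n' dG r c) (E1 n' dE r c)"
    unfolding E1_def using a1 up by (cases "c < n' + 1") simp_all
  show "gp e (E2 n' dG r c) (E2 n' dE r c)"
    unfolding E2_def using a2 up by (cases "c < n'") simp_all
  show "gp e (E3 n' dG r c) (E3 n' dE r c)"
  proof (cases "c < n'")
    case True
    show ?thesis unfolding E3_def if_P[OF True] by (rule a3)
  next
    case False
    show ?thesis unfolding E3_def if_not_P[OF False] by (rule up)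
  qed
qed


lemma emb_gp: "gp e (emb p) (ev e p)"
  unfolding gp_def emb_def using goodI[of e 1 p] phi_Fract[of e 1 p] by simp

lemma transfer_det:
  assumes HG: "HG \<in> carrier_mat n n" and HE: "HE \<in> carrier_mat n n"
    and g: "\<And>r c. r < n \<Longrightarrow> c < n \<Longrightarrow> gp e (HG $$ (r, c)) (HE $$ (r, c))"
  shows "good e (det HG) \<and> phi e (det HG) = det HE"
proof -
  have "good e (det HG) \<and> phi e (det HG) = det (map_mat (phi e) HG)"
    using g unfolding gp_def by (intro good_det[OF HG]) blast
  moreover have "map_mat (phi e) HG = HE"
    using HG HE g unfolding gp_def by (intro eq_matI) auto
  ultimately show ?thesis by simp
qed

lemma poly_point:
  fixes P :: "'f::field mpoly"
  assumes "P \<noteq> 0"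
  shows "\<exists>e :: lecvar \<Rightarrow> 'f alg_closure. ev e P \<noteq> 0"
proof -
  have "\<exists>m. Poly_Mapping.lookup P m \<noteq> 0" using assms by (metis lookup_zero poly_mapping_eqI)
  then obtain m0 where m0: "m0 \<in> Poly_Mapping.keys P" by (auto simp: in_keys_iff)
  have "\<exists>e :: lecvar \<Rightarrow> 'f alg_closure. (\<Sum>m\<in>Poly_Mapping.keys P. to_ac (Poly_Mapping.lookup P m) * monoe e (id m)) \<noteq> 0"
  proof (rule nonvanish_gen[OF alg_closed_infinite])
    show "finite (\<Union>m\<in>Poly_Mapping.keys P. Poly_Mapping.keys m)" by simp
    show "finite (Poly_Mapping.keys P)" by simp
    show "\<forall>m\<in>Poly_Mapping.keys P. Poly_Mapping.keys (id m) \<subseteq> (\<Union>m\<in>Poly_Mapping.keys P. Poly_Mapping.keys m)" by auto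
    have "{m \<in> Poly_Mapping.keys P. id m = m0} = {m0}" using m0 by auto
    then show "(\<Sum>m\<in>{m \<in> Poly_Mapping.keys P. id m = m0}. to_ac (Poly_Mapping.lookup P m)) \<noteq> 0"
      using m0 by (simp add: in_keys_iff)
  qed
  then show ?thesis unfolding ev_def by simp
qed

lemma prod_nz_factor:
  fixes f :: "'a \<Rightarrow> 'b::idom"
  shows "finite A \<Longrightarrow> prod f A \<noteq> 0 \<Longrightarrow> a \<in> A \<Longrightarrow> f a \<noteq> 0"
  using prod_zero_iff[of A f] by blast

theorem theorem4:
  fixes N :: "'v mun" and p m n' :: nat and \<alpha> :: "'f::{field,finite}"
  assumes "prime p" and "card (UNIV :: 'f set) = p ^ m"
    and "finite_dag N"
    and "\<forall>i\<in>{1,2,3}. min_cut N (src N i) (dst N i) = 1"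
    and "\<forall>i\<in>{1,2,3}. \<forall>j\<in>{1,2,3}. i \<noteq> j \<longrightarrow> min_cut N (src N i) (dst N j) \<ge> 1"
    and "n' > 0" and "\<not> p dvd (2 * n' + 1)" and "(2 * n' + 1) dvd (p ^ m - 1)"
    and "\<alpha> ^ (2 * n' + 1) = 1" and "\<forall>k. 0 < k \<and> k < 2 * n' + 1 \<longrightarrow> \<alpha> ^ k \<noteq> 1"
    and "vec_space.rank (2 * n' + 1)
           (hcat (2 * n' + 1) (V1 N lec_indet (rconst \<alpha>) n')
              (minv (Mhat N lec_indet (rconst \<alpha>) (2 * n' + 1) 1 1)
                 * Mhat N lec_indet (rconst \<alpha>) (2 * n' + 1) 2 1 * V2 N lec_indet (rconst \<alpha>) n'))
         = 2 * n' + 1"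
    and "vec_space.rank (2 * n' + 1)
           (hcat (2 * n' + 1)
              (minv (Mhat N lec_indet (rconst \<alpha>) (2 * n' + 1) 1 2)
                 * Mhat N lec_indet (rconst \<alpha>) (2 * n' + 1) 2 2 * V2 N lec_indet (rconst \<alpha>) n')
              (V1 N lec_indet (rconst \<alpha>) n'))
         = 2 * n' + 1"
    and "vec_space.rank (2 * n' + 1)
           (hcat (2 * n' + 1)
              (minv (Mhat N lec_indet (rconst \<alpha>) (2 * n' + 1) 1 3)
                 * Mhat N lec_indet (rconst \<alpha>) (2 * n' + 1) 3 3 * V3 N lec_indet (rconst \<alpha>) n')
              (V1 N lec_indet (rconst \<alpha>) n'))
         = 2 * n' + 1"
  shows "\<exists>eps :: lecvar \<Rightarrow> 'f alg_closure.
           (\<forall>i\<in>{1,2,3}. \<forall>j\<in>{1,2,3}. invertible_mat (Mhat N eps (to_ac \<alpha>) (2 * n' + 1) i j)) \<and>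
           (\<forall>j\<in>{1,2,3}. \<exists>G. G \<in> carrier_mat (xlen n' j) (2 * n' + 1) \<and>
              (\<forall>xs. (\<forall>i\<in>{1,2,3}. xs i \<in> carrier_vec (xlen n' i)) \<longrightarrow>
                   G *\<^sub>v Yout N eps (to_ac \<alpha>) n' j xs = xs j))"
proof -
  let ?n = "2 * n' + 1"
  have dag: "finite_dag N" by fact
  have a0: "\<alpha> \<noteq> 0" using assms(9) by (metis power_0_left zero_neq_one add_gr_0 less_numeral_extra(1) neq0_conv)
  have inf: "infinite (UNIV :: 'f alg_closure set)" by (rule alg_closed_infinite)
  have pne: "paths N (src N i) (dst N j) \<noteq> {}" if "i \<in> {1,2,3}" "j \<in> {1,2,3}" for i j
  proof (cases "i = j")
    case True
    then have "min_cut N (src N i) (dst N j) = 1" using assms(4) that by blast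
    then show ?thesis by (intro path_exists) simp
  next
    case False
    then show ?thesis using assms(5) that by (intro path_exists) blast
  qed
  have Pnz: "Pm N \<alpha> i j r \<noteq> 0" if ij: "i \<in> {1,2,3}" "j \<in> {1,2,3}" for i j r
  proof -
    have "to_ac \<alpha> ^ r \<noteq> (0 :: 'f alg_closure)" using a0 by simp
    then obtain e0 :: "lecvar \<Rightarrow> 'f alg_closure" where "Mval N e0 i j (to_ac \<alpha> ^ r) \<noteq> 0"
      using Mval_nonvanish[OF dag pne[OF ij] _ inf] by blast
    then have "ev e0 (Pm N \<alpha> i j r) \<noteq> 0" by (simp add: ev_Pm)
    then show ?thesis by auto
  qed
  define dG where "dG = dd N (lec_indet :: lecvar \<Rightarrow> 'f ratfun) (rconst \<alpha>)"
  have dG_emb: "dG i j r = emb (Pm N \<alpha> i j r)" for i j r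
    unfolding dG_def dd_def by (rule Mval_generic)
  have emb_nz: "emb p \<noteq> 0" if "p \<noteq> 0" for p :: "'f mpoly"
    using that eq_fract(1)[of 1 1 p 0] unfolding emb_def Zero_fract_def by simp
  have nzG: "nzd dG ?n" unfolding nzd_def dG_emb using Pnz emb_nz by blast
  have nzG': "nzd (dd N (lec_indet :: lecvar \<Rightarrow> 'f ratfun) (rconst \<alpha>)) ?n" using nzG unfolding dG_def .
  define HG1 where "HG1 = hcat ?n (V1 N lec_indet (rconst \<alpha>) n')
              (minv (Mhat N lec_indet (rconst \<alpha>) ?n 1 1)
                 * Mhat N lec_indet (rconst \<alpha>) ?n 2 1 * V2 N (lec_indet :: lecvar \<Rightarrow> 'f ratfun) (rconst \<alpha>) n')"
  define HG2 where "HG2 = hcat ?n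
              (minv (Mhat N lec_indet (rconst \<alpha>) ?n 1 2)
                 * Mhat N lec_indet (rconst \<alpha>) ?n 2 2 * V2 N lec_indet (rconst \<alpha>) n')
              (V1 N (lec_indet :: lecvar \<Rightarrow> 'f ratfun) (rconst \<alpha>) n')"
  define HG3 where "HG3 = hcat ?n
              (minv (Mhat N lec_indet (rconst \<alpha>) ?n 1 3)
                 * Mhat N lec_indet (rconst \<alpha>) ?n 3 3 * V3 N lec_indet (rconst \<alpha>) n')
              (V1 N (lec_indet :: lecvar \<Rightarrow> 'f ratfun) (rconst \<alpha>) n')"
  have cG: "HG1 \<in> carrier_mat ?n ?n" "HG2 \<in> carrier_mat ?n ?n" "HG3 \<in> carrier_mat ?n ?n"
    unfolding HG1_def HG2_def HG3_def
    by (rule H1_carrier[OF nzG'] H2_carrier[OF nzG'] H3_carrier[OF nzG'])+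
  have detG: "det HG1 \<noteq> 0" "det HG2 \<noteq> 0" "det HG3 \<noteq> 0"
    using vec_space.det_rank_iff[OF cG(1)] vec_space.det_rank_iff[OF cG(2)] vec_space.det_rank_iff[OF cG(3)]
      assms(11) assms(12) assms(13) unfolding HG1_def HG2_def HG3_def by auto
  have fr: "\<exists>p q. q \<noteq> 0 \<and> p \<noteq> 0 \<and> x = Fract p q" if "x \<noteq> 0" for x :: "'f ratfun"
  proof (cases x)
    case (Fract p q)
    then have "p \<noteq> 0" using that by (auto simp: fract_collapse)
    then show ?thesis using Fract by blast
  qed
  obtain p1 q1 where pq1: "q1 \<noteq> 0" "p1 \<noteq> 0" "det HG1 = Fract p1 q1" using fr[OF detG(1)] by blast
  obtain p2 q2 where pq2: "q2 \<noteq> 0" "p2 \<noteq> 0" "det HG2 = Fract p2 q2" using fr[OF detG(2)] by blast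
  obtain p3 q3 where pq3: "q3 \<noteq> 0" "p3 \<noteq> 0" "det HG3 = Fract p3 q3" using fr[OF detG(3)] by blast
  define PP where "PP = (\<Prod>i\<in>{1,2,3::nat}. \<Prod>j\<in>{1,2,3::nat}. \<Prod>r\<in>{..<?n}. Pm N \<alpha> i j r)"
  define P where "P = PP * (p1 * q1 * p2 * q2 * p3 * q3)"
  have PPnz: "PP \<noteq> 0" unfolding PP_def using Pnz by (simp add: prod_zero_iff)
  have "P \<noteq> 0" unfolding P_def using PPnz pq1 pq2 pq3 by simp
  then obtain e :: "lecvar \<Rightarrow> 'f alg_closure" where eP: "ev e P \<noteq> 0" using poly_point by blast
  have evPP: "ev e PP \<noteq> 0" and evpq: "ev e p1 \<noteq> 0" "ev e q1 \<noteq> 0" "ev e p2 \<noteq> 0" "ev e q2 \<noteq> 0"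
    "ev e p3 \<noteq> 0" "ev e q3 \<noteq> 0" using eP unfolding P_def by (simp_all add: ev_mult)
  have evPm: "ev e (Pm N \<alpha> i j r) \<noteq> 0" if ij: "i \<in> {1,2,3}" "j \<in> {1,2,3}" "r < ?n" for i j r
  proof -
    have eq: "ev e PP = (\<Prod>i\<in>{1,2,3::nat}. \<Prod>j\<in>{1,2,3::nat}. \<Prod>r\<in>{..<?n}. ev e (Pm N \<alpha> i j r))"
      unfolding PP_def by (simp only: ev_hom.hom_prod)
    have h0: "(\<Prod>i\<in>{1,2,3::nat}. \<Prod>j\<in>{1,2,3::nat}. \<Prod>r\<in>{..<?n}. ev e (Pm N \<alpha> i j r)) \<noteq> 0"
      using evPP unfolding eq .
    have h1: "(\<Prod>j\<in>{1,2,3::nat}. \<Prod>r\<in>{..<?n}. ev e (Pm N \<alpha> i j r)) \<noteq> 0"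
      by (rule prod_nz_factor[where f="\<lambda>i. \<Prod>j\<in>{1,2,3::nat}. \<Prod>r\<in>{..<?n}. ev e (Pm N \<alpha> i j r)", OF _ h0 ij(1)]) simp
    have h2: "(\<Prod>r\<in>{..<?n}. ev e (Pm N \<alpha> i j r)) \<noteq> 0"
      by (rule prod_nz_factor[where f="\<lambda>j. \<Prod>r\<in>{..<?n}. ev e (Pm N \<alpha> i j r)", OF _ h1 ij(2)]) simp
    show ?thesis
      by (rule prod_nz_factor[where f="\<lambda>r. ev e (Pm N \<alpha> i j r)", OF _ h2]) (use ij(3) in simp_all)
  qed
  define dE where "dE = dd N e (to_ac \<alpha>)"
  have dE_ev: "dE i j r = ev e (Pm N \<alpha> i j r)" for i j r by (simp add: dE_def dd_def ev_Pm)
  have nzE: "nzd dE ?n" unfolding nzd_def dE_ev using evPm by blast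
  have nzE': "nzd (dd N e (to_ac \<alpha>)) ?n" using nzE unfolding dE_def .
  have gpd: "gp e (dG i j r) (dE i j r)" for i j r unfolding dG_emb dE_ev by (rule emb_gp)
  define HE1 where "HE1 = hcat ?n (V1 N e (to_ac \<alpha>) n')
              (minv (Mhat N e (to_ac \<alpha>) ?n 1 1) * Mhat N e (to_ac \<alpha>) ?n 2 1 * V2 N e (to_ac \<alpha>) n')"
  define HE2 where "HE2 = hcat ?n
              (minv (Mhat N e (to_ac \<alpha>) ?n 1 2) * Mhat N e (to_ac \<alpha>) ?n 2 2 * V2 N e (to_ac \<alpha>) n')
              (V1 N e (to_ac \<alpha>) n')"
  define HE3 where "HE3 = hcat ?n
              (minv (Mhat N e (to_ac \<alpha>) ?n 1 3) * Mhat N e (to_ac \<alpha>) ?n 3 3 * V3 N e (to_ac \<alpha>) n')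
              (V1 N e (to_ac \<alpha>) n')"
  have cE: "HE1 \<in> carrier_mat ?n ?n" "HE2 \<in> carrier_mat ?n ?n" "HE3 \<in> carrier_mat ?n ?n"
    unfolding HE1_def HE2_def HE3_def
    by (rule H1_carrier[OF nzE'] H2_carrier[OF nzE'] H3_carrier[OF nzE'])+
  have nzr: "\<And>i j. i \<in> {1,2,3} \<Longrightarrow> j \<in> {1,2,3} \<Longrightarrow> dE i j r \<noteq> 0" if "r < ?n" for r
    using nzdD[OF nzE _ _ that] by blast
  have gpH: "gp e (HG1 $$ (r, c)) (HE1 $$ (r, c))" "gp e (HG2 $$ (r, c)) (HE2 $$ (r, c))"
      "gp e (HG3 $$ (r, c)) (HE3 $$ (r, c))" if rc: "r < ?n" "c < ?n" for r c
  proof -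
    have G: "HG1 $$ (r, c) = E1 n' dG r c" "HG2 $$ (r, c) = E2 n' dG r c" "HG3 $$ (r, c) = E3 n' dG r c"
      unfolding HG1_def HG2_def HG3_def dG_def
      by (rule H1_index[OF nzG' rc] H2_index[OF nzG' rc] H3_index[OF nzG' rc])+
    have E: "HE1 $$ (r, c) = E1 n' dE r c" "HE2 $$ (r, c) = E2 n' dE r c" "HE3 $$ (r, c) = E3 n' dE r c"
      unfolding HE1_def HE2_def HE3_def dE_def
      by (rule H1_index[OF nzE' rc] H2_index[OF nzE' rc] H3_index[OF nzE' rc])+
    show "gp e (HG1 $$ (r, c)) (HE1 $$ (r, c))" "gp e (HG2 $$ (r, c)) (HE2 $$ (r, c))"
      "gp e (HG3 $$ (r, c)) (HE3 $$ (r, c))"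
      unfolding G E using E_transfer[of e dG r dE, OF gpd nzr[OF rc(1)]] by blast+
  qed
  have detE: "det HE1 \<noteq> 0" "det HE2 \<noteq> 0" "det HE3 \<noteq> 0"
  proof -
    have "phi e (det HG1) = det HE1" using transfer_det[OF cG(1) cE(1) gpH(1)] by blast
    moreover have "phi e (det HG1) \<noteq> 0" unfolding pq1(3) using evpq by (simp add: phi_Fract)
    ultimately show "det HE1 \<noteq> 0" by simp
    have "phi e (det HG2) = det HE2" using transfer_det[OF cG(2) cE(2) gpH(2)] by blast
    moreover have "phi e (det HG2) \<noteq> 0" unfolding pq2(3) using evpq by (simp add: phi_Fract)
    ultimately show "det HE2 \<noteq> 0" by simp
    have "phi e (det HG3) = det HE3" using transfer_det[OF cG(3) cE(3) gpH(3)] by blast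
    moreover have "phi e (det HG3) \<noteq> 0" unfolding pq3(3) using evpq by (simp add: phi_Fract)
    ultimately show "det HE3 \<noteq> 0" by simp
  qed
  let ?M = "\<lambda>i j. Mhat N e (to_ac \<alpha>) ?n i j"
  have Mcar: "?M i j \<in> carrier_mat ?n ?n" for i j unfolding Mhat_dg by simp
  have Minv: "minv (?M i j) \<in> carrier_mat ?n ?n" "minv (?M i j) * ?M i j = 1\<^sub>m ?n"
    if "i \<in> {1,2,3}" "j \<in> {1,2,3}" for i j
  proof -
    have eq: "minv (dg ?n (dd N e (to_ac \<alpha>) i j)) = dg ?n (\<lambda>r. inverse (dd N e (to_ac \<alpha>) i j r))"
      by (rule minv_dg_dd[OF nzE' that])
    show "minv (?M i j) \<in> carrier_mat ?n ?n" unfolding Mhat_dg eq by simp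
    have "\<forall>r<?n. dd N e (to_ac \<alpha>) i j r \<noteq> 0" using nzdD[OF nzE' that] by blast
    then show "minv (?M i j) * ?M i j = 1\<^sub>m ?n" unfolding Mhat_dg eq by (rule dg_inverse(2))
  qed
  have inv: "invertible_mat (?M i j)" if "i \<in> {1,2,3}" "j \<in> {1,2,3}" for i j
  proof -
    have "\<forall>r<?n. dd N e (to_ac \<alpha>) i j r \<noteq> 0" using nzdD[OF nzE' that] by blast
    then show ?thesis unfolding Mhat_dg by (rule invertible_dg)
  qed
  have one: "1 \<in> {1,2,3::nat}" and two: "2 \<in> {1,2,3::nat}" and three: "3 \<in> {1,2,3::nat}" by simp_all
  have Y: "Yout N e (to_ac \<alpha>) n' j xs = ?M 1 j *\<^sub>v (V1 N e (to_ac \<alpha>) n' *\<^sub>v xs 1)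
       + ?M 2 j *\<^sub>v (V2 N e (to_ac \<alpha>) n' *\<^sub>v xs 2) + ?M 3 j *\<^sub>v (V3 N e (to_ac \<alpha>) n' *\<^sub>v xs 3)" for j xs
    unfolding Yout_def Let_def ..
  have xsc: "xs 1 \<in> carrier_vec (n' + 1)" "xs 2 \<in> carrier_vec n'" "xs 3 \<in> carrier_vec n'"
    if "\<forall>i\<in>{1,2,3}. xs i \<in> carrier_vec (xlen n' i)" for xs :: "nat \<Rightarrow> 'f alg_closure vec"
    using that by (auto simp: xlen_def)
  have dec: "\<exists>G. G \<in> carrier_mat (xlen n' j) ?n \<and>
              (\<forall>xs. (\<forall>i\<in>{1,2,3}. xs i \<in> carrier_vec (xlen n' i)) \<longrightarrow>
                   G *\<^sub>v Yout N e (to_ac \<alpha>) n' j xs = xs j)" if j: "j \<in> {1,2,3}" for j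
  proof -
    consider "j = 1" | "j = 2" | "j = 3" using j by blast
    then show ?thesis
    proof cases
      case 1
      obtain G where G: "G \<in> carrier_mat (n' + 1) ?n"
        "\<And>x y. x \<in> carrier_vec (n' + 1) \<Longrightarrow> y \<in> carrier_vec n' \<Longrightarrow> G *\<^sub>v (?M 1 1 *\<^sub>v (HE1 *\<^sub>v (x @\<^sub>v y))) = x"
        using decode[OF Mcar Minv[OF one one] cE(1) detE(1), of "n' + 1" n'] by auto
      show ?thesis
      proof (intro exI conjI allI impI)
        show "G \<in> carrier_mat (xlen n' j) ?n" using G(1) 1 by (simp add: xlen_def)
        fix xs :: "nat \<Rightarrow> 'f alg_closure vec" assume "\<forall>i\<in>{1,2,3}. xs i \<in> carrier_vec (xlen n' i)"
        note x = xsc[OF this]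
        have "Yout N e (to_ac \<alpha>) n' 1 xs = ?M 1 1 *\<^sub>v (HE1 *\<^sub>v (xs 1 @\<^sub>v (xs 2 + xs 3)))"
          unfolding Y HE1_def by (rule Y1[OF nzE' x])
        then show "G *\<^sub>v Yout N e (to_ac \<alpha>) n' j xs = xs j" using G(2)[OF x(1) add_carrier_vec[OF x(2) x(3)]] 1 by simp
      qed
    next
      case 2
      obtain G where G: "G \<in> carrier_mat n' ?n"
        "\<And>x y. x \<in> carrier_vec n' \<Longrightarrow> y \<in> carrier_vec (n' + 1) \<Longrightarrow> G *\<^sub>v (?M 1 2 *\<^sub>v (HE2 *\<^sub>v (x @\<^sub>v y))) = x"
        using decode[OF Mcar Minv[OF one two] cE(2) detE(2), of n' "n' + 1"] by auto
      show ?thesis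
      proof (intro exI conjI allI impI)
        show "G \<in> carrier_mat (xlen n' j) ?n" using G(1) 2 by (simp add: xlen_def)
        fix xs :: "nat \<Rightarrow> 'f alg_closure vec" assume "\<forall>i\<in>{1,2,3}. xs i \<in> carrier_vec (xlen n' i)"
        note x = xsc[OF this]
        have y: "xs 1 + Sh n' *\<^sub>v xs 3 \<in> carrier_vec (n' + 1)"
          by (rule add_carrier_vec[OF x(1) mult_mat_vec_carrier[OF Sh_carrier x(3)]])
        have "Yout N e (to_ac \<alpha>) n' 2 xs = ?M 1 2 *\<^sub>v (HE2 *\<^sub>v (xs 2 @\<^sub>v (xs 1 + Sh n' *\<^sub>v xs 3)))"
          unfolding Y HE2_def by (rule Y2[OF nzE' x])
        then show "G *\<^sub>v Yout N e (to_ac \<alpha>) n' j xs = xs j" using G(2)[OF x(2) y] 2 by simp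
      qed
    next
      case 3
      obtain G where G: "G \<in> carrier_mat n' ?n"
        "\<And>x y. x \<in> carrier_vec n' \<Longrightarrow> y \<in> carrier_vec (n' + 1) \<Longrightarrow> G *\<^sub>v (?M 1 3 *\<^sub>v (HE3 *\<^sub>v (x @\<^sub>v y))) = x"
        using decode[OF Mcar Minv[OF one three] cE(3) detE(3), of n' "n' + 1"] by auto
      show ?thesis
      proof (intro exI conjI allI impI)
        show "G \<in> carrier_mat (xlen n' j) ?n" using G(1) 3 by (simp add: xlen_def)
        fix xs :: "nat \<Rightarrow> 'f alg_closure vec" assume "\<forall>i\<in>{1,2,3}. xs i \<in> carrier_vec (xlen n' i)"
        note x = xsc[OF this]
        have y: "xs 1 + Pd n' *\<^sub>v xs 2 \<in> carrier_vec (n' + 1)"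
          by (rule add_carrier_vec[OF x(1) mult_mat_vec_carrier[OF Pd_carrier x(2)]])
        have "Yout N e (to_ac \<alpha>) n' 3 xs = ?M 1 3 *\<^sub>v (HE3 *\<^sub>v (xs 3 @\<^sub>v (xs 1 + Pd n' *\<^sub>v xs 2)))"
          unfolding Y HE3_def by (rule Y3[OF nzE' x])
        then show "G *\<^sub>v Yout N e (to_ac \<alpha>) n' j xs = xs j" using G(2)[OF x(3) y] 3 by simp
      qed
    qed
  qed
  show ?thesis
    by (intro exI[of _ e] conjI ballI dec inv)
qed


end
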